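(* In the setting described in the context (Assumptions A and B hold), run the VS-PGR scheme with batch sizes $S_k=\lceil\alpha^{-2}\rho^{-(k+1)}\rceil$ for some $\rho\in(0,1)$, with $\mathbb{E}[\|x_0-x^*\|^2]\le C$ for some $C>0$, and with step size $\alpha\in(0,2\eta/\tilde L^2)$. Then $q\triangleq1-2\alpha\eta+\alpha^2\tilde L^2<1$ and for every $k\ge0$: (i) if $\rho\ne q$, $\mathbb{E}[\|x_k-x^*\|^2]\le C(\rho,q)\max\{\rho,q\}^k$, where $C(\rho,q)\triangleq C+\frac{\alpha^2\nu^2}{\max\{\rho/q,q/\rho\}-1}$; (ii) if $\rho=q$, then for any $\tilde q\in(q,1)$, $\mathbb{E}[\|x_k-x^*\|^2]\le\tilde D\tilde q^k$, where $\tilde D\triangleq C+\frac{\alpha^2\nu^2}{\ln((\tilde q/q)^e)}$.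
   Context: Game: $n$ players; player $i$ chooses $x_i\in\mathbb{R}^{d_i}$, $x=(x_1,\dots,x_n)\in\mathbb{R}^d$, and solves $\min_{x_i} f_i(x_i,x_{-i})+r_i(x_i)$ with $f_i(x)=\mathbb{E}[\psi_i(x;\xi_i)]$, $\xi_i$ a random vector in $\mathbb{R}^{m_i}$. A Nash equilibrium (NE) is $x^*$ such that for each $i$, $x_i^*$ minimizes $f_i(\cdot,x_{-i}^* )+r_i(\cdot)$. Assumption A: for each $i$, (i) $r_i$ is lower semicontinuous and convex with effective domain $\mathcal{R}_i$; (ii) for every $x_{-i}\in\prod_{j\ne i}\mathcal{R}_j$, $f_i(\cdot,x_{-i})$ is continuously differentiable and convex on an open set containing $\mathcal{R}_i$; (iii) for every such $x_{-i}$ and every $\xi_i$, $\psi_i(\cdot,x_{-i};\xi_i)$ is differentiable on an open set containing $\mathcal{R}_i$. Let $\mathcal{R}=\prod_j\mathcal{R}_j$, $G(x)=(\nabla_{x_i}f_i(x))_{i=1}^n$, $\mathrm{prox}_{\alpha r_i}(z)=\arg\min_y(r_i(y)+\frac1{2\alpha}\|y-z\|^2)$. VS-PGR scheme: with $x_{i,0}\in\mathcal{R}_i$, at iteration $k$ each player $i$ draws $S_k$ realizations $\xi_{i,k}^p$ of $\xi_i$ and sets $x_{i,k+1}=\mathrm{prox}_{\alpha r_i}\big[x_{i,k}-\frac{\alpha}{S_k}\sum_{p=1}^{S_k}\nabla_{x_i}\psi_i(x_k;\xi_{i,k}^p)\big]$. Let $\bar w_{k,S_k}=\frac1{S_k}\sum_p(\nabla_{x_i}\psi_i(x_k;\xi_{i,k}^p))_{i}-G(x_k)$,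 $\mathcal{F}_k=\sigma\{x_0,\dots,x_k\}$. Assumption B: (i) $G$ is $L$-Lipschitz on $\mathcal{R}$; (ii) $G$ is $\eta$-strongly monotone on $\mathcal{R}$: $(G(x)-G(y))^T(x-y)\ge\eta\|x-y\|^2$; (iii) there are $\nu_1,\nu_2\ge0$ with $\mathbb{E}[\|\bar w_{k,S_k}\|^2\mid\mathcal{F}_k]\le(\nu_1^2\|x_k\|^2+\nu_2^2)/S_k$ a.s. The NE $x^*$ is unique. Constants: $\tilde L\triangleq\sqrt{1+2(1+2\alpha^2)\nu_1^2+2L^2}$, $\nu^2\triangleq2(1+2\alpha^2)\nu_1^2\|x^*\|^2+(1+2\alpha^2)\nu_2^2$, and $\ln((\tilde q/q)^e)=e\ln(\tilde q/q)$. *)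

theory Defs
  imports "HOL-Probability.Probability"
begin

text \<open>Block structure. The joint decision vector lives in real^'n; the map blk :: 'n => 'p
assigns each coordinate to a player.  Player i's decision x_i is the block of coordinates
with blk j = i.\<close>

definition restr :: "('n \<Rightarrow> 'p) \<Rightarrow> 'p \<Rightarrow> real^'n \<Rightarrow> real^'n" where
  "restr blk i x = (\<chi> j. if blk j = i then x $ j else 0)"

definition embed :: "('n \<Rightarrow> 'p) \<Rightarrow> 'p \<Rightarrow> real^'n \<Rightarrow> real^'n \<Rightarrow> real^'n" where
  "embed blk i u x = (\<chi> j. if blk j = i then u $ j else x $ j)"

definition gradf :: "(real^'n \<Rightarrow> real) \<Rightarrow> real^'n \<Rightarrow> real^'n" where
  "gradf g u = (THE v. (g has_derivative (\<lambda>h. v \<bullet> h)) (at u))"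

text \<open>Partial gradient with respect to block i at x (as a vector supported on block i).\<close>
definition pgrad :: "('n \<Rightarrow> 'p) \<Rightarrow> (real^'n \<Rightarrow> real) \<Rightarrow> 'p \<Rightarrow> real^'n \<Rightarrow> real^'n" where
  "pgrad blk g i x = gradf (\<lambda>u. g (embed blk i u x)) x"

definition Gmap :: "('n \<Rightarrow> 'p) \<Rightarrow> ('p \<Rightarrow> real^'n \<Rightarrow> real) \<Rightarrow> real^'n \<Rightarrow> real^'n" where
  "Gmap blk f x = (\<chi> j. pgrad blk (f (blk j)) (blk j) x $ j)"

definition edom :: "('a \<Rightarrow> ereal) \<Rightarrow> 'a set" where
  "edom r = {x. r x < \<infinity>}"

definition econvex :: "(real^'n \<Rightarrow> ereal) \<Rightarrow> bool" where
  "econvex r \<longleftrightarrow> (\<forall>x y t. 0 < t \<and> t < 1 \<longrightarrow>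
      r (t *\<^sub>R x + (1 - t) *\<^sub>R y) \<le> ereal t * r x + ereal (1 - t) * r y)"

definition elsc :: "(real^'n \<Rightarrow> ereal) \<Rightarrow> bool" where
  "elsc r \<longleftrightarrow> (\<forall>x X. X \<longlonglongrightarrow> x \<longrightarrow> r x \<le> liminf (\<lambda>k. r (X k)))"

definition prox :: "('n \<Rightarrow> 'p) \<Rightarrow> 'p \<Rightarrow> (real^'n \<Rightarrow> ereal) \<Rightarrow> real \<Rightarrow> real^'n \<Rightarrow> real^'n" where
  "prox blk i r \<alpha> z = (THE y. restr blk i y = y \<and>
     (\<forall>y'. restr blk i y' = y' \<longrightarrow>
        r y + ereal ((norm (y - restr blk i z))\<^sup>2 / (2 * \<alpha>))
          \<le> r y' + ereal ((norm (y' - restr blk i z))\<^sup>2 / (2 * \<alpha>))))"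

definition is_NE :: "('n \<Rightarrow> 'p) \<Rightarrow> ('p \<Rightarrow> real^'n \<Rightarrow> real) \<Rightarrow> ('p \<Rightarrow> real^'n \<Rightarrow> ereal)
    \<Rightarrow> real^'n \<Rightarrow> bool" where
  "is_NE blk f r xs \<longleftrightarrow> (\<forall>i u. ereal (f i xs) + r i xs
       \<le> ereal (f i (embed blk i u xs)) + r i (embed blk i u xs))"

definition ghat :: "('n \<Rightarrow> 'p) \<Rightarrow> ('p \<Rightarrow> real^'n \<Rightarrow> 'e \<Rightarrow> real)
    \<Rightarrow> ('p \<Rightarrow> nat \<Rightarrow> nat \<Rightarrow> 'w \<Rightarrow> 'e) \<Rightarrow> (nat \<Rightarrow> nat) \<Rightarrow> nat \<Rightarrow> real^'n \<Rightarrow> 'w \<Rightarrow> real^'n" where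
  "ghat blk \<psi> \<xi> S k x \<omega> = (\<chi> j. (1 / real (S k)) *
      (\<Sum>p<S k. pgrad blk (\<lambda>y. \<psi> (blk j) y (\<xi> (blk j) k p \<omega>)) (blk j) x $ j))"

definition natfilt :: "'w measure \<Rightarrow> (nat \<Rightarrow> 'w \<Rightarrow> real^'n) \<Rightarrow> nat \<Rightarrow> 'w measure" where
  "natfilt M x k = sigma (space M)
     (\<Union>j\<in>{..k}. {x j -` A \<inter> space M | A. A \<in> sets borel})"

end

theory Submission
  imports Defs
begin


lemma restr_nth[simp]: "restr blk i x $ j = (if blk j = i then x $ j else 0)"
  by (simp add: restr_def)

lemma restr_idem[simp]: "restr blk i (restr blk i x) = restr blk i x"
  by (simp add: vec_eq_iff)

lemma restr_diff: "restr blk i (x - y) = restr blk i x - restr blk i y"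
  by (simp add: vec_eq_iff)

lemma restr_add: "restr blk i (x + y) = restr blk i x + restr blk i y"
  by (simp add: vec_eq_iff)

lemma restr_scale: "restr blk i (c *\<^sub>R x) = c *\<^sub>R restr blk i x"
  by (simp add: vec_eq_iff)

lemma linear_restr: "linear (restr blk i)"
  by (rule linearI) (simp_all add: restr_add restr_scale)

lemma inner_restr_left:
  fixes a d :: "real^'n::finite"
  assumes "restr blk i d = d"
  shows "restr blk i a \<bullet> d = a \<bullet> d"
proof -
  have "restr blk i a \<bullet> d = (\<Sum>j\<in>UNIV. restr blk i a $ j * d $ j)" by (simp add: inner_vec_def)
  also have "\<dots> = (\<Sum>j\<in>UNIV. a $ j * d $ j)"
  proof (rule sum.cong)
    fix j assume "j \<in> (UNIV::'n set)"
    have "d $ j = restr blk i d $ j" using assms by simp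
    then show "restr blk i a $ j * d $ j = a $ j * d $ j" by (auto split: if_splits)
  qed simp
  finally show ?thesis by (simp add: inner_vec_def)
qed

lemma norm_sq_blocks:
  fixes v :: "real^'n::finite" and blk :: "'n \<Rightarrow> 'p::finite"
  shows "(norm v)\<^sup>2 = (\<Sum>i\<in>UNIV. (norm (restr blk i v))\<^sup>2)"
proof -
  have "(\<Sum>i\<in>UNIV. (norm (restr blk i v))\<^sup>2) = (\<Sum>i\<in>UNIV. \<Sum>j\<in>UNIV. (if blk j = i then v $ j * v $ j else 0))"
    by (simp add: power2_norm_eq_inner inner_vec_def if_distrib cong: if_cong)
  also have "\<dots> = (\<Sum>j\<in>UNIV. \<Sum>i\<in>UNIV. (if blk j = i then v $ j * v $ j else 0))"
    by (rule sum.swap)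
  also have "\<dots> = (\<Sum>j\<in>UNIV. v $ j * v $ j)"
    by simp
  finally show ?thesis by (simp add: power2_norm_eq_inner inner_vec_def)
qed

lemma norm_restr_le: "norm (restr blk i (v::real^'n::finite)) \<le> norm v"
proof -
  have "(norm (restr blk i v))\<^sup>2 \<le> (norm v)\<^sup>2"
    by (simp add: power2_norm_eq_inner inner_vec_def sum_mono)
  then show ?thesis by (simp add: power2_le_iff_abs_le)
qed

lemma closed_blockspace: "closed {y::real^'n::finite. restr blk i y = y}"
proof -
  have "continuous_on UNIV (restr blk i :: real^'n \<Rightarrow> real^'n)"
    using linear_restr by (intro linear_continuous_on) (simp add: linear_conv_bounded_linear)
  then show ?thesis
    by (intro closed_Collect_eq) (auto intro: continuous_on_id)
qed

lemma lsc_attains_min: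
  fixes \<phi> :: "'a::metric_space \<Rightarrow> ereal"
  assumes K: "compact K" "K \<noteq> {}"
    and lsc: "\<And>X y. (\<forall>n. X n \<in> K) \<Longrightarrow> y \<in> K \<Longrightarrow> X \<longlonglongrightarrow> y \<Longrightarrow> \<phi> y \<le> liminf (\<lambda>n. \<phi> (X n))"
  shows "\<exists>p\<in>K. \<forall>y\<in>K. \<phi> p \<le> \<phi> y"
proof -
  obtain u where u: "\<forall>n. u n \<in> \<phi> ` K" "u \<longlonglongrightarrow> Inf (\<phi> ` K)"
    using Inf_as_limit[of "\<phi> ` K"] K by auto
  have "\<forall>n. \<exists>x\<in>K. u n = \<phi> x" using u by auto
  then obtain X where X: "\<And>n. X n \<in> K" "\<And>n. u n = \<phi> (X n)" by metis
  obtain l h where l: "l \<in> K" "strict_mono (h::nat\<Rightarrow>nat)" "(X \<circ> h) \<longlonglongrightarrow> l"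
    using seq_compactE[OF compact_imp_seq_compact[OF K(1)], of X] X by auto
  have "(u \<circ> h) \<longlonglongrightarrow> Inf (\<phi> ` K)" using LIMSEQ_subseq_LIMSEQ u(2) l(2) by blast
  then have "liminf (\<lambda>n. \<phi> ((X \<circ> h) n)) = Inf (\<phi> ` K)"
    using X(2) by (intro lim_imp_Liminf) (auto simp: o_def)
  moreover have "\<phi> l \<le> liminf (\<lambda>n. \<phi> ((X \<circ> h) n))"
    using lsc[of "X \<circ> h" l] l X by auto
  ultimately have "\<phi> l \<le> Inf (\<phi> ` K)" by simp
  then show ?thesis using l(1) by (metis INF_lower order_trans)
qed

lemma grad_repr:
  fixes h :: "real^'n::finite \<Rightarrow> real"
  assumes "h differentiable (at u)"
  shows "(h has_derivative (\<lambda>k. gradf h u \<bullet> k)) (at u)"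
proof -
  obtain D where D: "(h has_derivative D) (at u)" using assms by (auto simp: differentiable_def)
  have lin: "linear D" using D has_derivative_linear by blast
  define v where "v = (\<Sum>i\<in>Basis. D i *\<^sub>R i)"
  have "D k = v \<bullet> k" for k
  proof -
    have "D k = D k \<bullet> 1" by simp
    also have "\<dots> = (\<Sum>i\<in>Basis. (k \<bullet> i) * (D i \<bullet> 1))" by (rule Linear_Algebra.linear_componentwise[OF lin])
    also have "\<dots> = v \<bullet> k" by (simp add: v_def inner_sum_left inner_sum_right inner_commute mult.commute)
    finally show ?thesis .
  qed
  then have Dv: "(h has_derivative (\<lambda>k. v \<bullet> k)) (at u)" using D by (metis (no_types) ext)
  have "gradf h u = v"
    unfolding gradf_def
  proof (rule the_equality)
    fix w assume "(h has_derivative (\<lambda>k. w \<bullet> k)) (at u)"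
    then have "(\<lambda>k. w \<bullet> k) = (\<lambda>k. v \<bullet> k)" using Dv has_derivative_unique by blast
    then have "w \<bullet> (w - v) = v \<bullet> (w - v)" by metis
    then have "(w - v) \<bullet> (w - v) = 0" by (simp add: inner_diff_left)
    then show "w = v" by simp
  qed (rule Dv)
  then show ?thesis using Dv by simp
qed



definition VIp :: "('n::finite \<Rightarrow> 'p) \<Rightarrow> 'p \<Rightarrow> (real^'n \<Rightarrow> ereal) \<Rightarrow> real \<Rightarrow> real^'n \<Rightarrow> real^'n \<Rightarrow> bool" where
  "VIp blk i r \<alpha> c p \<longleftrightarrow> restr blk i p = p \<and> r p < \<infinity> \<and> r p \<noteq> -\<infinity> \<and>
     (\<forall>y. restr blk i y = y \<and> r y < \<infinity> \<longrightarrow> (c - p) \<bullet> (y - p) \<le> \<alpha> * (real_of_ereal (r y) - real_of_ereal (r p)))"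

lemma VI_nonexp:
  assumes "VIp blk i r \<alpha> c1 p1" "VIp blk i r \<alpha> c2 p2"
  shows "norm (p1 - p2) \<le> norm (c1 - c2)"
proof -
  have h1: "(c1 - p1) \<bullet> (p2 - p1) \<le> \<alpha> * (real_of_ereal (r p2) - real_of_ereal (r p1))"
    using assms unfolding VIp_def by blast
  have h2: "(c2 - p2) \<bullet> (p1 - p2) \<le> \<alpha> * (real_of_ereal (r p1) - real_of_ereal (r p2))"
    using assms unfolding VIp_def by blast
  have id: "(c1 - p1) \<bullet> (p2 - p1) + (c2 - p2) \<bullet> (p1 - p2) = (p1 - p2) \<bullet> (p1 - p2) - (c1 - c2) \<bullet> (p1 - p2)"
    by (simp add: inner_diff_left inner_diff_right inner_commute)
  have "(p1 - p2) \<bullet> (p1 - p2) \<le> (c1 - c2) \<bullet> (p1 - p2)"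
    using h1 h2 id by (simp add: algebra_simps)
  also have "\<dots> \<le> norm (c1 - c2) * norm (p1 - p2)" by (rule norm_cauchy_schwarz)
  finally have "norm (p1 - p2) * norm (p1 - p2) \<le> norm (c1 - c2) * norm (p1 - p2)"
    by (simp add: power2_norm_eq_inner[symmetric] power2_eq_square)
  then show ?thesis
    by (cases "norm (p1 - p2) = 0") (auto simp: mult_le_cancel_right)
qed

lemma small_t_lemma:
  fixes A B :: real
  assumes "B \<ge> 0" "\<And>t. 0 < t \<Longrightarrow> t < 1 \<Longrightarrow> 0 \<le> A + t * B"
  shows "0 \<le> A"
proof (rule ccontr)
  assume "\<not> 0 \<le> A"
  then have A: "A < 0" by simp
  define t where "t = min (1/2) (- A / (2 * (B + 1)))"
  have "0 < -A / (2*(B+1))" using A assms(1) by (intro divide_pos_pos) auto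
  then have t0: "0 < t" by (simp add: t_def)
  have t1: "t < 1" by (simp add: t_def)
  have "t * B \<le> (- A / (2 * (B + 1))) * B"
    using assms(1) by (intro mult_right_mono) (auto simp: t_def)
  also have "\<dots> \<le> - A / 2"
  proof -
    have "(- A / (2 * (B + 1))) * B = (-A/2) * (B / (B+1))" using assms(1) by (simp add: field_simps)
    also have "\<dots> \<le> (-A/2) * 1" using A assms(1) by (intro mult_left_mono) auto
    finally show ?thesis by simp
  qed
  finally have "A + t * B < 0" using A by simp
  then show False using assms(2)[OF t0 t1] by simp
qed

lemma min_VI:
  fixes r :: "real^'n::finite \<Rightarrow> ereal"
  assumes conv: "econvex r" and \<alpha>: "0 < \<alpha>"
    and p: "restr blk i p = p" "r p < \<infinity>" and proper: "\<forall>y. r y \<noteq> -\<infinity>"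
    and mn: "\<forall>y'. restr blk i y' = y' \<longrightarrow> r p + ereal ((norm (p - c))\<^sup>2 / (2 * \<alpha>)) \<le> r y' + ereal ((norm (y' - c))\<^sup>2 / (2 * \<alpha>))"
  shows "VIp blk i r \<alpha> c p"
  unfolding VIp_def
proof (intro conjI allI impI)
  show "restr blk i p = p" "r p < \<infinity>" "r p \<noteq> -\<infinity>" using p proper by auto
  fix y assume y: "restr blk i y = y \<and> r y < \<infinity>"
  obtain a where a: "r p = ereal a" using p proper by (cases "r p") auto
  obtain b where b: "r y = ereal b" using y proper by (cases "r y") auto
  define d where "d = y - p"
  define u where "u = p - c"
  have key: "0 \<le> (b - a) + (u \<bullet> d) / \<alpha> + t * ((norm d)\<^sup>2 / (2 * \<alpha>))" if t: "0 < t" "t < 1" for t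
  proof -
    define yt where "yt = t *\<^sub>R y + (1 - t) *\<^sub>R p"
    have ytV: "restr blk i yt = yt" using y p by (simp add: yt_def restr_add restr_scale)
    have "r yt \<le> ereal t * r y + ereal (1 - t) * r p"
      using conv t unfolding econvex_def yt_def by blast
    then have c1: "r yt \<le> ereal (t * b + (1 - t) * a)" using a b by simp
    have "r p + ereal ((norm (p - c))\<^sup>2 / (2 * \<alpha>)) \<le> r yt + ereal ((norm (yt - c))\<^sup>2 / (2 * \<alpha>))"
      using mn ytV by blast
    also have "\<dots> \<le> ereal (t * b + (1 - t) * a) + ereal ((norm (yt - c))\<^sup>2 / (2 * \<alpha>))"
      using c1 by (rule add_right_mono)
    finally have "a + (norm u)\<^sup>2 / (2 * \<alpha>) \<le> t * b + (1 - t) * a + (norm (yt - c))\<^sup>2 / (2 * \<alpha>)"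
      using a by (simp add: u_def)
    moreover have "yt - c = u + t *\<^sub>R d" by (simp add: yt_def u_def d_def algebra_simps)
    moreover have "(norm (u + t *\<^sub>R d))\<^sup>2 = (norm u)\<^sup>2 + 2 * t * (u \<bullet> d) + t\<^sup>2 * (norm d)\<^sup>2"
    proof -
      have "(norm (u + t *\<^sub>R d))\<^sup>2 = (u + t *\<^sub>R d) \<bullet> (u + t *\<^sub>R d)" by (rule power2_norm_eq_inner)
      also have "\<dots> = u \<bullet> u + 2 * t * (u \<bullet> d) + t\<^sup>2 * (d \<bullet> d)"
        by (simp add: inner_add_left inner_add_right inner_commute power2_eq_square algebra_simps)
      finally show ?thesis by (simp add: power2_norm_eq_inner)
    qed
    ultimately have "a + (norm u)\<^sup>2 / (2 * \<alpha>) \<le> t * b + (1 - t) * a + ((norm u)\<^sup>2 + 2 * t * (u \<bullet> d) + t\<^sup>2 * (norm d)\<^sup>2) / (2 * \<alpha>)"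
      by simp
    then have "0 \<le> t * (b - a) + (2 * t * (u \<bullet> d) + t\<^sup>2 * (norm d)\<^sup>2) / (2 * \<alpha>)"
      by (simp add: add_divide_distrib algebra_simps)
    also have "\<dots> = t * ((b - a) + (u \<bullet> d) / \<alpha> + t * ((norm d)\<^sup>2 / (2 * \<alpha>)))"
      using \<alpha> by (simp add: field_simps power2_eq_square)
    finally show ?thesis using t by (simp add: zero_le_mult_iff)
  qed
  have "0 \<le> (b - a) + (u \<bullet> d) / \<alpha>"
    by (rule small_t_lemma[of "(norm d)\<^sup>2 / (2 * \<alpha>)"]) (use \<alpha> key in auto)
  then have "- (u \<bullet> d) \<le> \<alpha> * (b - a)" using \<alpha> by (simp add: field_simps)
  moreover have "(c - p) \<bullet> (y - p) = - (u \<bullet> d)" by (simp add: u_def d_def inner_diff_left)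
  ultimately show "(c - p) \<bullet> (y - p) \<le> \<alpha> * (real_of_ereal (r y) - real_of_ereal (r p))"
    using a b by simp
qed



lemma prox_exists:
  fixes r :: "real^'n::finite \<Rightarrow> ereal" and blk :: "'n \<Rightarrow> 'p"
  assumes rb: "\<forall>y. r y = r (restr blk i y)" and proper: "\<forall>y. r y \<noteq> -\<infinity>"
    and lsc: "elsc r" and conv: "econvex r" and y0: "r y0 < \<infinity>" and \<alpha>: "0 < \<alpha>"
  shows "\<exists>p. restr blk i p = p \<and> (\<forall>y'. restr blk i y' = y' \<longrightarrow>
     r p + ereal ((norm (p - c))\<^sup>2 / (2 * \<alpha>)) \<le> r y' + ereal ((norm (y' - c))\<^sup>2 / (2 * \<alpha>)))"
proof -
  define V where "V = {y::real^'n. restr blk i y = y}"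
  have clV: "closed V" unfolding V_def by (rule closed_blockspace)
  define y1 where "y1 = restr blk i y0"
  have y1V: "y1 \<in> V" by (simp add: V_def y1_def)
  have ry1: "r y1 = r y0" using rb by (simp add: y1_def)
  define r0 where "r0 = real_of_ereal (r y1)"
  have "r y1 \<noteq> \<infinity>" "r y1 \<noteq> -\<infinity>" using ry1 y0 proper by auto
  then have r0: "r y1 = ereal r0" unfolding r0_def by (cases "r y1") auto
  have seg: "t *\<^sub>R y + (1 - t) *\<^sub>R z \<in> V" if "y \<in> V" "z \<in> V" for t y z
    using that by (simp add: V_def restr_add restr_scale)
  define K1 where "K1 = V \<inter> cball y1 1"
  have cK1: "compact K1" unfolding K1_def by (intro closed_Int_compact clV compact_cball)
  have neK1: "K1 \<noteq> {}" using y1V by (auto simp: K1_def)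
  obtain p1 where p1: "p1 \<in> K1" "\<forall>y\<in>K1. r p1 \<le> r y"
    using lsc_attains_min[OF cK1 neK1, of r] lsc unfolding elsc_def by blast
  have y1K1: "y1 \<in> K1" using y1V by (simp add: K1_def)
  have "r p1 \<le> ereal r0" using p1(2) y1K1 r0 by metis
  then obtain m1 where m1: "r p1 = ereal m1" "m1 \<le> r0" using proper by (cases "r p1") auto
  define Kc where "Kc = r0 - m1"
  have Kc0: "0 \<le> Kc" using m1 by (simp add: Kc_def)
  have lowb: "ereal (r0 - Kc * (1 + norm (y - y1))) \<le> r y" if yV: "y \<in> V" for y
  proof (cases "norm (y - y1) \<le> 1")
    case True
    then have "y \<in> K1" using yV by (simp add: K1_def dist_norm norm_minus_commute)
    then have "ereal m1 \<le> r y" using p1 m1 by auto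
    moreover have "r0 - Kc * (1 + norm (y - y1)) \<le> m1"
    proof -
      have "0 \<le> Kc * norm (y - y1)" using Kc0 by simp
      then show ?thesis by (simp add: Kc_def algebra_simps)
    qed
    ultimately show ?thesis by (meson ereal_less_eq(3) order_trans)
  next
    case False
    define s where "s = norm (y - y1)"
    have s1: "1 < s" using False by (simp add: s_def)
    show ?thesis
    proof (cases "r y = \<infinity>")
      case True then show ?thesis by simp
    next
      case False
      then obtain b where b: "r y = ereal b" using proper by (cases "r y") auto
      define t where "t = 1 / s"
      have t: "0 < t" "t < 1" using s1 by (auto simp: t_def)
      define y' where "y' = t *\<^sub>R y + (1 - t) *\<^sub>R y1"
      have "y' - y1 = t *\<^sub>R (y - y1)" by (simp add: y'_def algebra_simps)
      then have "norm (y' - y1) = 1" using s1 by (auto simp: t_def s_def)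
      then have "y' \<in> K1" using seg[OF yV y1V] by (simp add: K1_def y'_def dist_norm norm_minus_commute)
      then have "ereal m1 \<le> r y'" using p1 m1 by auto
      also have "r y' \<le> ereal t * r y + ereal (1 - t) * r y1"
        using conv t unfolding econvex_def y'_def by blast
      finally have "m1 \<le> t * b + (1 - t) * r0" using b r0 by simp
      then have "s * m1 \<le> s * (t * b + (1 - t) * r0)" using s1 by (intro mult_left_mono) auto
      also have "\<dots> = b + (s - 1) * r0" using s1 by (simp add: t_def field_simps)
      finally have "r0 - s * Kc \<le> b" by (simp add: Kc_def algebra_simps)
      moreover have "r0 - Kc * (1 + s) \<le> r0 - s * Kc" using Kc0 by (simp add: algebra_simps)
      ultimately show ?thesis using b by (simp add: s_def)
    qed
  qed
  define Q where "Q = (\<lambda>y::real^'n. (norm (y - c))\<^sup>2 / (2 * \<alpha>))"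
  define \<phi> where "\<phi> = (\<lambda>y. r y + ereal (Q y))"
  define d where "d = norm (y1 - c)"
  define T where "T = 1 + 2 * \<alpha> * Kc + d\<^sup>2 + 2 * \<alpha> * Kc * (1 + d)"
  have d0: "0 \<le> d" by (simp add: d_def)
  have T1: "1 \<le> T" using Kc0 \<alpha> d0 by (simp add: T_def)
  define K where "K = V \<inter> cball y1 (d + T)"
  have cK: "compact K" unfolding K_def by (intro closed_Int_compact clV compact_cball)
  have neK: "K \<noteq> {}" using y1V d0 T1 by (auto simp: K_def)
  have lscK: "\<phi> y \<le> liminf (\<lambda>n. \<phi> (X n))" if X: "X \<longlonglongrightarrow> y" for X y
  proof -
    have QX: "(\<lambda>n. ereal (Q (X n))) \<longlonglongrightarrow> ereal (Q y)"
      unfolding Q_def using \<alpha> by (intro tendsto_intros X) auto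
    have "liminf (\<lambda>n. \<phi> (X n)) = liminf (\<lambda>n. ereal (Q (X n)) + r (X n))"
      by (simp add: \<phi>_def add.commute)
    also have "\<dots> = ereal (Q y) + liminf (\<lambda>n. r (X n))"
      by (rule ereal_liminf_lim_add[OF QX]) simp
    finally have eq: "liminf (\<lambda>n. \<phi> (X n)) = ereal (Q y) + liminf (\<lambda>n. r (X n))" .
    have "r y \<le> liminf (\<lambda>n. r (X n))" using lsc X unfolding elsc_def by blast
    then have "ereal (Q y) + r y \<le> ereal (Q y) + liminf (\<lambda>n. r (X n))" by (rule add_left_mono)
    then show ?thesis using eq by (simp add: \<phi>_def add.commute)
  qed
  obtain p where p: "p \<in> K" "\<forall>y\<in>K. \<phi> p \<le> \<phi> y"
    using lsc_attains_min[OF cK neK, of \<phi>] lscK by blast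
  have y1K: "y1 \<in> K" using y1V d0 T1 by (auto simp: K_def)
  have glob: "\<phi> p \<le> \<phi> y" if yV: "y \<in> V" for y
  proof (cases "y \<in> K")
    case True then show ?thesis using p by auto
  next
    case False
    define s where "s = norm (y - y1)"
    have sR: "d + T < s" using False yV by (auto simp: K_def s_def dist_norm norm_minus_commute)
    define t where "t = s - d"
    have tT: "T < t" using sR by (simp add: t_def)
    have "s \<le> norm (y - c) + norm (c - y1)"
      unfolding s_def by (metis diff_add_cancel norm_triangle_ineq add_diff_eq)
    then have tle: "t \<le> norm (y - c)" by (simp add: t_def d_def norm_minus_commute)
    have t0: "0 \<le> t" using tT T1 by simp
    have "t * t \<le> norm (y - c) * norm (y - c)" using tle t0 by (intro mult_mono) auto
    moreover have "t * T \<le> t * t" using tT t0 by (intro mult_left_mono) auto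
    moreover have "t * T = t * (2 * \<alpha> * Kc) + t * (1 + d\<^sup>2 + 2 * \<alpha> * Kc * (1 + d))"
      by (simp add: T_def algebra_simps)
    moreover have "1 * (1 + d\<^sup>2 + 2 * \<alpha> * Kc * (1 + d)) \<le> t * (1 + d\<^sup>2 + 2 * \<alpha> * Kc * (1 + d))"
      using tT T1 Kc0 \<alpha> d0 by (intro mult_right_mono) auto
    ultimately have ineq: "d\<^sup>2 + 2 * \<alpha> * Kc * (1 + s) \<le> (norm (y - c))\<^sup>2"
      by (simp add: t_def power2_eq_square algebra_simps)
    have "\<phi> y1 = ereal (r0 + d\<^sup>2 / (2 * \<alpha>))" by (simp add: \<phi>_def Q_def r0 d_def)
    also have "r0 + d\<^sup>2 / (2 * \<alpha>) \<le> r0 - Kc * (1 + s) + Q y"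
    proof -
      have "d\<^sup>2 / (2 * \<alpha>) + Kc * (1 + s) = (d\<^sup>2 + 2 * \<alpha> * Kc * (1 + s)) / (2 * \<alpha>)"
        using \<alpha> by (simp add: field_simps)
      also have "\<dots> \<le> (norm (y - c))\<^sup>2 / (2 * \<alpha>)" using ineq \<alpha> by (intro divide_right_mono) auto
      finally show ?thesis by (simp add: Q_def)
    qed
    then have "ereal (r0 + d\<^sup>2 / (2 * \<alpha>)) \<le> ereal (r0 - Kc * (1 + s)) + ereal (Q y)" by simp
    also have "\<dots> \<le> \<phi> y" unfolding \<phi>_def using lowb[OF yV] unfolding s_def by (rule add_right_mono)
    finally have "\<phi> y1 \<le> \<phi> y" .
    then show ?thesis using p(2) y1K by (meson order_trans)
  qed
  show ?thesis
    using p(1) glob by (intro exI[of _ p]) (auto simp: K_def V_def \<phi>_def Q_def)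
qed

lemma prox_VI:
  fixes r :: "real^'n::finite \<Rightarrow> ereal" and blk :: "'n \<Rightarrow> 'p"
  assumes rb: "\<forall>y. r y = r (restr blk i y)" and proper: "\<forall>y. r y \<noteq> -\<infinity>"
    and lsc: "elsc r" and conv: "econvex r" and y0: "r y0 < \<infinity>" and \<alpha>: "0 < \<alpha>"
  shows "VIp blk i r \<alpha> (restr blk i z) (prox blk i r \<alpha> z)"
proof -
  let ?c = "restr blk i z"
  let ?P = "\<lambda>p. restr blk i p = p \<and> (\<forall>y'. restr blk i y' = y' \<longrightarrow>
     r p + ereal ((norm (p - ?c))\<^sup>2 / (2 * \<alpha>)) \<le> r y' + ereal ((norm (y' - ?c))\<^sup>2 / (2 * \<alpha>)))"
  have fin: "r p < \<infinity>" if "?P p" for p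
  proof -
    have "r p + ereal ((norm (p - ?c))\<^sup>2 / (2 * \<alpha>)) \<le> r (restr blk i y0) + ereal ((norm (restr blk i y0 - ?c))\<^sup>2 / (2 * \<alpha>))"
      using that by simp
    also have "\<dots> < \<infinity>"
    proof -
      have "r (restr blk i y0) < \<infinity>" using rb y0 by metis
      then show ?thesis by (cases "r (restr blk i y0)") auto
    qed
    finally show ?thesis by auto
  qed
  have VI: "VIp blk i r \<alpha> ?c p" if "?P p" for p
    using that fin[OF that] by (intro min_VI[OF conv \<alpha> _ _ proper]) auto
  obtain p where p: "?P p" using prox_exists[OF rb proper lsc conv y0 \<alpha>] by blast
  have "?P (prox blk i r \<alpha> z)"
    unfolding prox_def
  proof (rule theI[of ?P p])
    show "?P p" by (rule p)
    fix q assume "?P q"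
    then have "norm (q - p) \<le> norm (?c - ?c)" using VI_nonexp[OF VI VI] p by blast
    then show "q = p" by simp
  qed
  then show ?thesis by (rule VI)
qed



lemma restr_Gmap:
  "restr blk i (Gmap blk f x) = restr blk i (pgrad blk (f i) i x)"
  by (simp add: vec_eq_iff Gmap_def)

lemma embed_line:
  assumes "restr blk i d = d"
  shows "embed blk i (xs + t *\<^sub>R d) xs = xs + t *\<^sub>R d"
proof -
  have "d $ j = 0" if "blk j \<noteq> i" for j
    using that arg_cong[OF assms, of "\<lambda>v. v $ j"] by simp
  then show ?thesis by (auto simp: vec_eq_iff embed_def)
qed

lemma embed_self: "embed blk i x x = x"
  by (simp add: vec_eq_iff embed_def)

lemma NE_VI:
  fixes blk :: "'n::finite \<Rightarrow> 'p" and f :: "'p \<Rightarrow> real^'n \<Rightarrow> real"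
    and r :: "'p \<Rightarrow> real^'n \<Rightarrow> ereal"
  assumes NE: "is_NE blk f r xs" and xsR: "\<forall>j. xs \<in> edom (r j)"
    and r_block: "\<forall>i y. r i y = r i (restr blk i y)"
    and r_proper: "\<forall>i y. r i y \<noteq> - \<infinity>"
    and r_convex: "\<forall>i. econvex (r i)"
    and A2: "\<forall>i y. (\<forall>j. j \<noteq> i \<longrightarrow> y \<in> edom (r j)) \<longrightarrow>
       (\<exists>U. open U \<and> edom (r i) \<subseteq> U
          \<and> (\<forall>u\<in>U. (\<lambda>v. f i (embed blk i v y)) differentiable (at u))
          \<and> continuous_on U (gradf (\<lambda>v. f i (embed blk i v y)))
          \<and> convex_on U (\<lambda>v. f i (embed blk i v y)))"
    and \<alpha>: "0 < \<alpha>"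
  shows "VIp blk i (r i) \<alpha> (restr blk i (xs - \<alpha> *\<^sub>R Gmap blk f xs)) (restr blk i xs)"
  unfolding VIp_def
proof (intro conjI allI impI)
  define ps where "ps = restr blk i xs"
  have rps: "r i ps = r i xs" using r_block by (simp add: ps_def)
  have xfin: "r i xs < \<infinity>" using xsR by (simp add: edom_def)
  show "restr blk i (restr blk i xs) = restr blk i xs" by simp
  show "r i (restr blk i xs) < \<infinity>" "r i (restr blk i xs) \<noteq> -\<infinity>"
    using rps xfin r_proper by (auto simp: ps_def)
  obtain a where a: "r i xs = ereal a" using xfin r_proper by (cases "r i xs") auto
  fix y assume y: "restr blk i y = y \<and> r i y < \<infinity>"
  obtain b where b: "r i y = ereal b" using y r_proper by (cases "r i y") auto
  define d where "d = y - ps"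
  have dV: "restr blk i d = d" using y by (simp add: d_def ps_def restr_diff)
  define h where "h = (\<lambda>v. f i (embed blk i v xs))"
  obtain U where U: "open U" "edom (r i) \<subseteq> U" "\<forall>u\<in>U. h differentiable (at u)"
    using A2[rule_format, of i xs] xsR unfolding h_def by blast
  have "xs \<in> U" using U(2) xsR by auto
  then have hd: "(h has_derivative (\<lambda>k. gradf h xs \<bullet> k)) (at xs)"
    using U(3) grad_repr by blast
  define gr where "gr = gradf h xs"
  have grp: "gr = pgrad blk (f i) i xs" by (simp add: gr_def h_def pgrad_def)
  have Gd: "Gmap blk f xs \<bullet> d = gr \<bullet> d"
  proof -
    have "Gmap blk f xs \<bullet> d = restr blk i (Gmap blk f xs) \<bullet> d" using inner_restr_left[OF dV] by simp
    also have "\<dots> = restr blk i gr \<bullet> d" by (simp add: restr_Gmap grp)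
    also have "\<dots> = gr \<bullet> d" using inner_restr_left[OF dV] by simp
    finally show ?thesis .
  qed
  define g where "g = (\<lambda>t::real. h (xs + t *\<^sub>R d))"
  have lin: "((\<lambda>t::real. xs + t *\<^sub>R d) has_derivative (\<lambda>t. t *\<^sub>R d)) (at 0)"
    by (auto intro!: derivative_eq_intros)
  have hd0: "(h has_derivative (\<lambda>k. gr \<bullet> k)) (at ((\<lambda>t::real. xs + t *\<^sub>R d) 0))"
    using hd by (simp add: gr_def)
  have "((h \<circ> (\<lambda>t. xs + t *\<^sub>R d)) has_derivative ((\<lambda>k. gr \<bullet> k) \<circ> (\<lambda>t. t *\<^sub>R d))) (at 0)"
    by (rule diff_chain_at[OF lin hd0])
  moreover have "(\<lambda>k. gr \<bullet> k) \<circ> (\<lambda>t. t *\<^sub>R d) = (*) (gr \<bullet> d)" by (auto simp: fun_eq_iff)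
  ultimately have "(g has_field_derivative (gr \<bullet> d)) (at 0)"
    by (simp add: has_field_derivative_def g_def o_def)
  then have "(g has_field_derivative (gr \<bullet> d)) (at 0 within {0<..})"
    by (rule has_field_derivative_at_within)
  then have lim: "((\<lambda>t. (g t - g 0) / (t - 0)) \<longlongrightarrow> gr \<bullet> d) (at_right 0)"
    by (simp add: has_field_derivative_iff)
  have ev: "eventually (\<lambda>t. (g t - g 0) / (t - 0) \<ge> a - b) (at_right (0::real))"
  proof (rule eventually_at_rightI[of 0 1])
    fix t :: real assume "t \<in> {0<..<1}"
    then have t: "0 < t" "t < 1" by auto
    have e: "embed blk i (xs + t *\<^sub>R d) xs = xs + t *\<^sub>R d" by (rule embed_line[OF dV])
    have "restr blk i (xs + t *\<^sub>R d) = ps + t *\<^sub>R d"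
      using dV by (simp add: restr_add restr_scale ps_def)
    also have "\<dots> = t *\<^sub>R y + (1 - t) *\<^sub>R ps" by (simp add: d_def algebra_simps)
    finally have "restr blk i (xs + t *\<^sub>R d) = t *\<^sub>R y + (1 - t) *\<^sub>R ps" .
    then have "r i (xs + t *\<^sub>R d) = r i (t *\<^sub>R y + (1 - t) *\<^sub>R ps)" using r_block by metis
    also have "\<dots> \<le> ereal t * r i y + ereal (1 - t) * r i ps"
      using r_convex t unfolding econvex_def by blast
    finally have rl: "r i (xs + t *\<^sub>R d) \<le> ereal (t * b + (1 - t) * a)" using a b rps by simp
    have "ereal (f i xs) + r i xs \<le> ereal (f i (xs + t *\<^sub>R d)) + r i (xs + t *\<^sub>R d)"
      using NE e unfolding is_NE_def by metis
    also have "\<dots> \<le> ereal (f i (xs + t *\<^sub>R d)) + ereal (t * b + (1 - t) * a)"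
      using rl by (rule add_left_mono)
    finally have "f i xs + a \<le> f i (xs + t *\<^sub>R d) + (t * b + (1 - t) * a)" using a by simp
    moreover have "g t = f i (xs + t *\<^sub>R d)" "g 0 = f i xs"
      using e by (simp_all add: g_def h_def embed_self)
    ultimately have "t * (a - b) \<le> g t - g 0" by (simp add: algebra_simps)
    then show "(g t - g 0) / (t - 0) \<ge> a - b" using t by (simp add: field_simps)
  qed simp
  have "a - b \<le> gr \<bullet> d"
    by (rule tendsto_le[OF _ lim tendsto_const ev]) simp
  have "(restr blk i (xs - \<alpha> *\<^sub>R Gmap blk f xs) - restr blk i xs) \<bullet> (y - restr blk i xs)
      = - \<alpha> * (Gmap blk f xs \<bullet> d)"
  proof -
    have "restr blk i (xs - \<alpha> *\<^sub>R Gmap blk f xs) - restr blk i xs = - \<alpha> *\<^sub>R restr blk i (Gmap blk f xs)"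
      by (simp add: restr_diff restr_scale)
    then show ?thesis using inner_restr_left[OF dV] by (simp add: d_def ps_def)
  qed
  also have "\<dots> \<le> \<alpha> * (b - a)"
  proof -
    have "\<alpha> * (a - b) \<le> \<alpha> * (gr \<bullet> d)" using \<open>a - b \<le> gr \<bullet> d\<close> \<alpha> by (intro mult_left_mono) auto
    then show ?thesis using Gd by (simp add: algebra_simps)
  qed
  finally show "(restr blk i (xs - \<alpha> *\<^sub>R Gmap blk f xs) - restr blk i xs) \<bullet> (y - restr blk i xs)
      \<le> \<alpha> * (real_of_ereal (r i y) - real_of_ereal (r i (restr blk i xs)))"
    using a b rps by (simp add: ps_def)
qed



definition Pmap :: "('n::finite \<Rightarrow> 'p) \<Rightarrow> ('p \<Rightarrow> real^'n \<Rightarrow> ereal) \<Rightarrow> real \<Rightarrow> real^'n \<Rightarrow> real^'n" where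
  "Pmap blk r \<alpha> z = (\<chi> j. prox blk (blk j) (r (blk j)) \<alpha> z $ j)"

lemma restr_Pmap:
  assumes "restr blk i (prox blk i (r i) \<alpha> z) = prox blk i (r i) \<alpha> z"
  shows "restr blk i (Pmap blk r \<alpha> z) = prox blk i (r i) \<alpha> z"
proof -
  have "prox blk i (r i) \<alpha> z $ j = 0" if "blk j \<noteq> i" for j
    using that arg_cong[OF assms, of "\<lambda>v. v $ j"] by simp
  then show ?thesis by (auto simp: vec_eq_iff Pmap_def)
qed

lemma Pmap_contr:
  fixes blk :: "'n::finite \<Rightarrow> 'p::finite"
  assumes pv: "\<forall>i z. VIp blk i (r i) \<alpha> (restr blk i z) (prox blk i (r i) \<alpha> z)"
    and wv: "\<forall>i. VIp blk i (r i) \<alpha> (restr blk i cw) (restr blk i w)"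
  shows "(norm (Pmap blk r \<alpha> z - w))\<^sup>2 \<le> (norm (z - cw))\<^sup>2"
proof -
  have rp: "restr blk i (Pmap blk r \<alpha> z) = prox blk i (r i) \<alpha> z" for i
    using pv by (intro restr_Pmap) (simp add: VIp_def)
  have "(norm (Pmap blk r \<alpha> z - w))\<^sup>2 = (\<Sum>i\<in>UNIV. (norm (restr blk i (Pmap blk r \<alpha> z - w)))\<^sup>2)"
    by (rule norm_sq_blocks)
  also have "\<dots> \<le> (\<Sum>i\<in>UNIV. (norm (restr blk i (z - cw)))\<^sup>2)"
  proof (rule sum_mono)
    fix i :: 'p
    have "norm (prox blk i (r i) \<alpha> z - restr blk i w) \<le> norm (restr blk i z - restr blk i cw)"
      using VI_nonexp[of blk i "r i" \<alpha> "restr blk i z" "prox blk i (r i) \<alpha> z" "restr blk i cw" "restr blk i w"] pv wv by blast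
    then show "(norm (restr blk i (Pmap blk r \<alpha> z - w)))\<^sup>2 \<le> (norm (restr blk i (z - cw)))\<^sup>2"
      by (simp add: restr_diff rp power_mono)
  qed
  also have "\<dots> = (norm (z - cw))\<^sup>2" by (rule norm_sq_blocks[symmetric])
  finally show ?thesis .
qed

lemma Pmap_lip:
  fixes blk :: "'n::finite \<Rightarrow> 'p::finite"
  assumes pv: "\<forall>i z. VIp blk i (r i) \<alpha> (restr blk i z) (prox blk i (r i) \<alpha> z)"
  shows "norm (Pmap blk r \<alpha> z1 - Pmap blk r \<alpha> z2) \<le> norm (z1 - z2)"
proof -
  have rp: "restr blk i (Pmap blk r \<alpha> z) = prox blk i (r i) \<alpha> z" for i z
    using pv by (intro restr_Pmap) (simp add: VIp_def)
  have "\<forall>i. VIp blk i (r i) \<alpha> (restr blk i z2) (restr blk i (Pmap blk r \<alpha> z2))"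
    using pv rp by simp
  then have "(norm (Pmap blk r \<alpha> z1 - Pmap blk r \<alpha> z2))\<^sup>2 \<le> (norm (z1 - z2))\<^sup>2"
    using Pmap_contr[OF pv] by blast
  then show ?thesis by (simp add: power2_le_iff_abs_le)
qed

lemma Pmap_cont:
  fixes blk :: "'n::finite \<Rightarrow> 'p::finite"
  assumes pv: "\<forall>i z. VIp blk i (r i) \<alpha> (restr blk i z) (prox blk i (r i) \<alpha> z)"
  shows "continuous_on UNIV (Pmap blk r \<alpha>)"
proof -
  have "1-lipschitz_on UNIV (Pmap blk r \<alpha>)"
    by (rule lipschitz_onI) (use Pmap_lip[OF pv] in \<open>auto simp: dist_norm\<close>)
  then show ?thesis by (rule lipschitz_on_continuous_on)
qed

lemma nsq_diff:
  fixes x y :: "'a::real_inner"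
  shows "(norm (x - y))\<^sup>2 = (norm x)\<^sup>2 - 2 * (x \<bullet> y) + (norm y)\<^sup>2"
  by (simp add: power2_norm_eq_inner inner_diff_left inner_diff_right inner_commute)

lemma nsq_scale:
  fixes x :: "'a::real_normed_vector"
  shows "(norm (c *\<^sub>R x))\<^sup>2 = c\<^sup>2 * (norm x)\<^sup>2"
  by (simp add: power_mult_distrib)

lemma young_step:
  fixes e D w :: "'a::real_inner"
  assumes \<alpha>: "0 < \<alpha>" and P: "0 < P" "P = 1 - 2 * \<alpha> * \<eta> + \<alpha>\<^sup>2 * L\<^sup>2"
    and DL: "(norm D)\<^sup>2 \<le> L\<^sup>2 * (norm e)\<^sup>2" and De: "\<eta> * (norm e)\<^sup>2 \<le> D \<bullet> e"
  shows "(norm (e - \<alpha> *\<^sub>R (D + w)))\<^sup>2 \<le> (P + \<alpha>\<^sup>2 * (1 + L\<^sup>2)) * (norm e)\<^sup>2 + (\<alpha>\<^sup>2 + P / (1 + L\<^sup>2)) * (norm w)\<^sup>2"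
proof -
  define a where "a = e - \<alpha> *\<^sub>R D"
  have "(norm a)\<^sup>2 = (norm e)\<^sup>2 - 2 * \<alpha> * (D \<bullet> e) + \<alpha>\<^sup>2 * (norm D)\<^sup>2"
    unfolding a_def nsq_diff nsq_scale by (simp add: inner_commute)
  also have "\<dots> \<le> (norm e)\<^sup>2 - 2 * \<alpha> * (\<eta> * (norm e)\<^sup>2) + \<alpha>\<^sup>2 * (L\<^sup>2 * (norm e)\<^sup>2)"
    using \<alpha> De DL by (intro add_mono diff_mono mult_left_mono) auto
  also have "\<dots> = P * (norm e)\<^sup>2" unfolding P(2) by (simp add: algebra_simps)
  finally have ha: "(norm a)\<^sup>2 \<le> P * (norm e)\<^sup>2" .
  define t where "t = \<alpha>\<^sup>2 * (1 + L\<^sup>2) / P"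
  have t0: "0 < t" using \<alpha> P by (simp add: t_def add_pos_nonneg)
  have "0 \<le> (norm (t *\<^sub>R a - (- \<alpha>) *\<^sub>R w))\<^sup>2" by simp
  also have "(norm (t *\<^sub>R a - (- \<alpha>) *\<^sub>R w))\<^sup>2 = t\<^sup>2 * (norm a)\<^sup>2 + 2 * t * \<alpha> * (a \<bullet> w) + \<alpha>\<^sup>2 * (norm w)\<^sup>2"
    by (simp only: nsq_diff nsq_scale) simp
  finally have "t * (- 2 * \<alpha> * (a \<bullet> w)) \<le> t\<^sup>2 * (norm a)\<^sup>2 + \<alpha>\<^sup>2 * (norm w)\<^sup>2" by simp
  moreover have "t * (t * (norm a)\<^sup>2 + (\<alpha>\<^sup>2 / t) * (norm w)\<^sup>2) = t\<^sup>2 * (norm a)\<^sup>2 + \<alpha>\<^sup>2 * (norm w)\<^sup>2"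
    using t0 by (simp add: algebra_simps power2_eq_square)
  ultimately have "t * (- 2 * \<alpha> * (a \<bullet> w)) \<le> t * (t * (norm a)\<^sup>2 + (\<alpha>\<^sup>2 / t) * (norm w)\<^sup>2)"
    by simp
  then have yg: "- 2 * \<alpha> * (a \<bullet> w) \<le> t * (norm a)\<^sup>2 + (\<alpha>\<^sup>2 / t) * (norm w)\<^sup>2"
    using t0 mult_le_cancel_left_pos[of t "- 2 * \<alpha> * (a \<bullet> w)" "t * (norm a)\<^sup>2 + (\<alpha>\<^sup>2 / t) * (norm w)\<^sup>2"] by linarith
  have "e - \<alpha> *\<^sub>R (D + w) = a - \<alpha> *\<^sub>R w" by (simp add: a_def algebra_simps)
  then have "(norm (e - \<alpha> *\<^sub>R (D + w)))\<^sup>2 = (norm a)\<^sup>2 - 2 * \<alpha> * (a \<bullet> w) + \<alpha>\<^sup>2 * (norm w)\<^sup>2"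
    by (simp only: nsq_diff nsq_scale) simp
  also have "\<dots> \<le> (1 + t) * (norm a)\<^sup>2 + (\<alpha>\<^sup>2 + \<alpha>\<^sup>2 / t) * (norm w)\<^sup>2"
    using yg by (simp add: algebra_simps)
  also have "\<dots> \<le> (1 + t) * (P * (norm e)\<^sup>2) + (\<alpha>\<^sup>2 + \<alpha>\<^sup>2 / t) * (norm w)\<^sup>2"
    using ha t0 by (intro add_mono mult_left_mono) auto
  also have "(1 + t) * (P * (norm e)\<^sup>2) = (P + \<alpha>\<^sup>2 * (1 + L\<^sup>2)) * (norm e)\<^sup>2"
    using P by (simp add: t_def field_simps)
  also have "\<alpha>\<^sup>2 / t = P / (1 + L\<^sup>2)"
  proof -
    have h: "1 + L\<^sup>2 > 0" by (simp add: add_pos_nonneg)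
    have "\<alpha>\<^sup>2 / (\<alpha>\<^sup>2 * (1 + L\<^sup>2) / P) = (\<alpha>\<^sup>2 / \<alpha>\<^sup>2) * (P / (1 + L\<^sup>2))"
      by simp
    also have "\<dots> = P / (1 + L\<^sup>2)" using \<alpha> by simp
    finally show ?thesis unfolding t_def .
  qed
  finally show ?thesis .
qed

lemma meas_cont_comp:
  assumes "continuous_on S g" "X \<in> borel_measurable M" "\<forall>\<omega>\<in>space M. X \<omega> \<in> S"
  shows "(\<lambda>\<omega>. g (X \<omega>)) \<in> borel_measurable M"
proof (rule borel_measurableI)
  fix B :: "'b set" assume "open B"
  then obtain A where A: "open A" "A \<inter> S = g -` B \<inter> S"
    using assms(1) unfolding continuous_on_open_invariant by blast
  have "(\<lambda>\<omega>. g (X \<omega>)) -` B \<inter> space M = X -` A \<inter> space M"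
    using A(2) assms(3) by blast
  moreover have "X -` A \<inter> space M \<in> sets M"
    using assms(2) A(1) by (intro measurable_sets) auto
  ultimately show "(\<lambda>\<omega>. g (X \<omega>)) -` B \<inter> space M \<in> sets M" by simp
qed

primrec bseq :: "real \<Rightarrow> real \<Rightarrow> real \<Rightarrow> real \<Rightarrow> nat \<Rightarrow> real" where
  "bseq C q g \<rho> 0 = C"
| "bseq C q g \<rho> (Suc k) = q * bseq C q g \<rho> k + g * \<rho> ^ Suc k"

lemma bseq_neq: "\<rho> \<noteq> q \<Longrightarrow> bseq C q g \<rho> k = C * q ^ k + g * \<rho> * (\<rho> ^ k - q ^ k) / (\<rho> - q)"
proof (induction k)
  case 0 then show ?case by simp
next
  case (Suc k)
  then have nz: "\<rho> - q \<noteq> 0" by simp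
  have "g * \<rho> * (\<rho> ^ Suc k - q ^ Suc k) = q * (g * \<rho> * (\<rho> ^ k - q ^ k)) + g * \<rho> ^ Suc k * (\<rho> - q)"
    by (simp add: algebra_simps)
  then have "g * \<rho> * (\<rho> ^ Suc k - q ^ Suc k) / (\<rho> - q) = q * (g * \<rho> * (\<rho> ^ k - q ^ k) / (\<rho> - q)) + g * \<rho> ^ Suc k"
    using nz by (simp add: field_simps)
  then show ?case using Suc by (simp add: algebra_simps)
qed

lemma bseq_eq: "bseq C q g q k = C * q ^ k + g * real k * q ^ k"
  by (induction k) (simp_all add: algebra_simps)



lemma final_neq:
  fixes \<rho> q g V C :: real
  assumes \<rho>: "0 < \<rho>" "\<rho> < 1" and q: "0 < q" and ne: "\<rho> \<noteq> q"
    and g: "0 \<le> g" "g \<le> V" "g \<le> V * q" and C: "0 \<le> C"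
  shows "bseq C q g \<rho> k \<le> (C + V / (max (\<rho> / q) (q / \<rho>) - 1)) * (max \<rho> q) ^ k"
proof (cases "q < \<rho>")
  case True
  have mx: "max \<rho> q = \<rho>" using True by simp
  have "q / \<rho> < 1" using True q \<rho> by simp
  moreover have "1 < \<rho> / q" using True q by simp
  ultimately have mr: "max (\<rho> / q) (q / \<rho>) = \<rho> / q" by simp
  have den: "\<rho> / q - 1 = (\<rho> - q) / q" using q by (simp add: field_simps)
  have pos: "0 < \<rho> - q" using True by simp
  have "bseq C q g \<rho> k = C * q ^ k + g * \<rho> * (\<rho> ^ k - q ^ k) / (\<rho> - q)" using bseq_neq[OF ne] .
  also have "\<dots> \<le> C * \<rho> ^ k + (V * q) * \<rho> ^ k / (\<rho> - q)"
  proof (rule add_mono)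
    show "C * q ^ k \<le> C * \<rho> ^ k" using C q True by (intro mult_left_mono power_mono) auto
    have "g * \<rho> * (\<rho> ^ k - q ^ k) \<le> (V * q) * \<rho> ^ k"
    proof -
      have f1: "g * \<rho> \<le> V * q" using g \<rho> by (metis mult_left_le order_trans less_imp_le)
      have f2: "\<rho> ^ k - q ^ k \<le> \<rho> ^ k" using q by simp
      have f3: "0 \<le> V * q" using g by linarith
      have f4: "0 \<le> \<rho> ^ k - q ^ k" using True q by (simp add: power_mono)
      show ?thesis using mult_mono[OF f1 f2 f3 f4] .
    qed
    then show "g * \<rho> * (\<rho> ^ k - q ^ k) / (\<rho> - q) \<le> (V * q) * \<rho> ^ k / (\<rho> - q)"
      using pos by (intro divide_right_mono) auto
  qed
  also have "\<dots> = (C + V * q / (\<rho> - q)) * \<rho> ^ k" by (simp add: distrib_right)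
  also have "V * q / (\<rho> - q) = V / (max (\<rho> / q) (q / \<rho>) - 1)"
    unfolding mr den by simp
  finally show ?thesis unfolding mx .
next
  case False
  then have lt: "\<rho> < q" using ne by simp
  have mx: "max \<rho> q = q" using lt by simp
  have "\<rho> / q < 1" using lt q by simp
  moreover have "1 < q / \<rho>" using lt \<rho> by simp
  ultimately have mr: "max (\<rho> / q) (q / \<rho>) = q / \<rho>" by simp
  have den: "q / \<rho> - 1 = (q - \<rho>) / \<rho>" using \<rho> by (simp add: field_simps)
  have pos: "0 < q - \<rho>" using lt by simp
  have "bseq C q g \<rho> k = C * q ^ k + g * \<rho> * (q ^ k - \<rho> ^ k) / (q - \<rho>)"
  proof -
    have "g * \<rho> * (\<rho> ^ k - q ^ k) / (\<rho> - q) = (- (g * \<rho> * (q ^ k - \<rho> ^ k))) / (- (q - \<rho>))"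
      by (simp add: algebra_simps)
    also have "\<dots> = g * \<rho> * (q ^ k - \<rho> ^ k) / (q - \<rho>)" by (rule minus_divide_divide)
    finally show ?thesis using bseq_neq[OF ne] by simp
  qed
  also have "\<dots> \<le> C * q ^ k + V * \<rho> * q ^ k / (q - \<rho>)"
  proof -
    have "g * \<rho> * (q ^ k - \<rho> ^ k) \<le> V * \<rho> * q ^ k"
    proof -
      have f1: "g * \<rho> \<le> V * \<rho>" using g \<rho> by (intro mult_right_mono) auto
      have f2: "q ^ k - \<rho> ^ k \<le> q ^ k" using \<rho> by simp
      have f3: "0 \<le> V * \<rho>" using g \<rho> by simp
      have f4: "0 \<le> q ^ k - \<rho> ^ k" using lt \<rho> by (simp add: power_mono)
      show ?thesis using mult_mono[OF f1 f2 f3 f4] .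
    qed
    then show ?thesis using pos by (intro add_left_mono divide_right_mono) auto
  qed
  also have "\<dots> = (C + V * \<rho> / (q - \<rho>)) * q ^ k" by (simp add: distrib_right)
  also have "V * \<rho> / (q - \<rho>) = V / (max (\<rho> / q) (q / \<rho>) - 1)"
    unfolding mr den by simp
  finally show ?thesis unfolding mx .
qed

lemma kexp_bound:
  fixes s :: real assumes s: "0 < s"
  shows "real k * exp (- (real k * s)) \<le> 1 / (exp 1 * s)"
proof -
  have "1 + (real k * s - 1) \<le> exp (real k * s - 1)" by (rule exp_ge_add_one_self)
  then have "real k * s \<le> exp (real k * s) / exp 1" by (simp add: exp_diff)
  then have "real k * s * exp 1 \<le> exp (real k * s)" by (simp add: field_simps)
  then have "real k * s * exp 1 * exp (- (real k * s)) \<le> exp (real k * s) * exp (- (real k * s))"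
    by (intro mult_right_mono) auto
  also have "\<dots> = 1" by (simp add: exp_minus field_simps)
  finally have "(real k * exp (- (real k * s))) * (exp 1 * s) \<le> 1" by (simp add: algebra_simps)
  then show ?thesis using s by (simp add: field_simps)
qed

lemma final_eq:
  fixes q qt g V C :: real
  assumes q: "0 < q" "q < qt" and g: "0 \<le> g" "g \<le> V" and C: "0 \<le> C"
  shows "bseq C q g q k \<le> (C + V / (exp 1 * ln (qt / q))) * qt ^ k"
proof -
  define s where "s = ln (qt / q)"
  have s: "0 < s" using q by (simp add: s_def)
  have qt0: "0 < qt" using q by simp
  have "(q / qt) ^ k = exp (- (real k * s))"
  proof -
    have "(q / qt) ^ k = exp (ln ((q / qt) ^ k))" using q qt0 by simp
    also have "ln ((q / qt) ^ k) = real k * ln (q / qt)" using q qt0 by (simp add: ln_realpow)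
    also have "ln (q / qt) = - s" using q qt0 by (simp add: s_def ln_div)
    finally show ?thesis by simp
  qed
  then have qk: "q ^ k = qt ^ k * exp (- (real k * s))" using qt0 by (simp add: power_divide field_simps)
  have "bseq C q g q k = C * q ^ k + g * (real k * q ^ k)" by (simp add: bseq_eq)
  also have "\<dots> \<le> C * qt ^ k + V * (qt ^ k / (exp 1 * s))"
  proof (rule add_mono)
    show "C * q ^ k \<le> C * qt ^ k" using C q by (intro mult_left_mono power_mono) auto
    have "real k * q ^ k = qt ^ k * (real k * exp (- (real k * s)))" using qk by simp
    also have "\<dots> \<le> qt ^ k * (1 / (exp 1 * s))" using kexp_bound[OF s] qt0 by (intro mult_left_mono) auto
    finally have "real k * q ^ k \<le> qt ^ k / (exp 1 * s)" by simp
    then show "g * (real k * q ^ k) \<le> V * (qt ^ k / (exp 1 * s))"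
      using g q by (intro mult_mono) auto
  qed
  also have "\<dots> = (C + V / (exp 1 * ln (qt / q))) * qt ^ k" by (simp add: s_def field_simps)
  finally show ?thesis .
qed



lemma natfilt_subalg:
  assumes "\<forall>j\<le>k. x j \<in> borel_measurable M"
  shows "subalgebra M (natfilt M x k)"
proof -
  define G where "G = (\<Union>j\<in>{..k}. {x j -` A \<inter> space M | A. A \<in> sets borel})"
  have GP: "G \<subseteq> Pow (space M)" by (auto simp: G_def)
  have GM: "G \<subseteq> sets M" using assms by (auto simp: G_def intro!: measurable_sets)
  have "space (natfilt M x k) = space M"
    unfolding natfilt_def G_def[symmetric] using GP by (rule space_measure_of)
  moreover have "sets (natfilt M x k) = sigma_sets (space M) G"
    unfolding natfilt_def G_def[symmetric] using GP by (rule sets_measure_of)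
  moreover have "sigma_sets (space M) G \<subseteq> sets M" using GM by (rule sets.sigma_sets_subset)
  ultimately show ?thesis by (simp add: subalgebra_def)
qed

lemma norm_sq_sum_le:
  fixes a b :: "'a::real_normed_vector"
  shows "(norm (a + b))\<^sup>2 \<le> 2 * (norm a)\<^sup>2 + 2 * (norm b)\<^sup>2"
proof -
  have "norm (a + b) \<le> norm a + norm b" by (rule norm_triangle_ineq)
  then have "(norm (a + b))\<^sup>2 \<le> (norm a + norm b)\<^sup>2" by (simp add: power_mono)
  also have "\<dots> \<le> 2 * (norm a)\<^sup>2 + 2 * (norm b)\<^sup>2"
    using sum_squares_bound[of "norm a" "norm b"] by (simp add: power2_sum algebra_simps)
  finally show ?thesis .
qed

theorem theorem1:
  fixes M :: "'w measure"
    and blk :: "'n::finite \<Rightarrow> 'p::finite"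
    and f :: "'p \<Rightarrow> real^'n \<Rightarrow> real"
    and r :: "'p \<Rightarrow> real^'n \<Rightarrow> ereal"
    and \<psi> :: "'p \<Rightarrow> real^'n \<Rightarrow> 'e \<Rightarrow> real"
    and D :: "'p \<Rightarrow> 'e measure"
    and \<xi> :: "'p \<Rightarrow> nat \<Rightarrow> nat \<Rightarrow> 'w \<Rightarrow> 'e"
    and x :: "nat \<Rightarrow> 'w \<Rightarrow> real^'n"
    and xs :: "real^'n"
    and \<alpha> \<rho> C L \<eta> \<nu>1 \<nu>2 :: real
    and S :: "nat \<Rightarrow> nat"
    and R :: "(real^'n) set"
    and Lt q \<nu>sq :: real
  defines "R \<equiv> {y. \<forall>j. y \<in> edom (r j)}"
    and "S \<equiv> (\<lambda>k. nat \<lceil>(1 / \<alpha>\<^sup>2) * (1 / \<rho> ^ (k + 1))\<rceil>)"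
    and "Lt \<equiv> sqrt (1 + 2 * (1 + 2 * \<alpha>\<^sup>2) * \<nu>1\<^sup>2 + 2 * L\<^sup>2)"
    and "\<nu>sq \<equiv> 2 * (1 + 2 * \<alpha>\<^sup>2) * \<nu>1\<^sup>2 * (norm xs)\<^sup>2 + (1 + 2 * \<alpha>\<^sup>2) * \<nu>2\<^sup>2"
    and "q \<equiv> 1 - 2 * \<alpha> * \<eta> + \<alpha>\<^sup>2 * Lt\<^sup>2"
  assumes M: "prob_space M"
    \<comment> \<open>Assumption A(i): r_i proper, lsc, convex; r_i depends only on player i's block\<close>
    and r_block: "\<forall>i y. r i y = r i (restr blk i y)"
    and r_proper: "\<forall>i y. r i y \<noteq> - \<infinity>"
    and r_lsc: "\<forall>i. elsc (r i)"
    and r_convex: "\<forall>i. econvex (r i)"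
    \<comment> \<open>f_i(x) = E[psi_i(x; xi_i)], xi_i with law D i\<close>
    and D: "\<forall>i. prob_space (D i)"
    and f_exp: "\<forall>i y. f i y = (\<integral>v. \<psi> i y v \<partial>D i)"
    and \<xi>_meas: "\<forall>i k p. \<xi> i k p \<in> measurable M (D i)"
    and \<xi>_law: "\<forall>i k p. distr M (D i) (\<xi> i k p) = D i"
    \<comment> \<open>Assumption A(ii)\<close>
    and A2: "\<forall>i y. (\<forall>j. j \<noteq> i \<longrightarrow> y \<in> edom (r j)) \<longrightarrow>
       (\<exists>U. open U \<and> edom (r i) \<subseteq> U
          \<and> (\<forall>u\<in>U. (\<lambda>v. f i (embed blk i v y)) differentiable (at u))
          \<and> continuous_on U (gradf (\<lambda>v. f i (embed blk i v y)))
          \<and> convex_on U (\<lambda>v. f i (embed blk i v y)))"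
    \<comment> \<open>Assumption A(iii)\<close>
    and A3: "\<forall>i y e. (\<forall>j. j \<noteq> i \<longrightarrow> y \<in> edom (r j)) \<longrightarrow>
       (\<exists>U. open U \<and> edom (r i) \<subseteq> U
          \<and> (\<forall>u\<in>U. (\<lambda>v. \<psi> i (embed blk i v y) e) differentiable (at u)))"
    \<comment> \<open>Assumption B(i), B(ii)\<close>
    and B1: "\<forall>y\<in>R. \<forall>z\<in>R. norm (Gmap blk f y - Gmap blk f z) \<le> L * norm (y - z)"
    and \<eta>_pos: "0 < \<eta>"
    and B2: "\<forall>y\<in>R. \<forall>z\<in>R. (Gmap blk f y - Gmap blk f z) \<bullet> (y - z) \<ge> \<eta> * (norm (y - z))\<^sup>2"
    and \<eta>_le_L: "\<eta> \<le> L"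
    \<comment> \<open>Assumption B(iii)\<close>
    and \<nu>_nonneg: "0 \<le> \<nu>1" "0 \<le> \<nu>2"
    and B3: "\<forall>k. AE \<omega> in M.
       nn_cond_exp M (natfilt M x k)
          (\<lambda>\<omega>. ennreal ((norm (ghat blk \<psi> \<xi> S k (x k \<omega>) \<omega> - Gmap blk f (x k \<omega>)))\<^sup>2)) \<omega>
       \<le> ennreal ((\<nu>1\<^sup>2 * (norm (x k \<omega>))\<^sup>2 + \<nu>2\<^sup>2) / real (S k))"
    \<comment> \<open>x* is the Nash equilibrium\<close>
    and NE: "is_NE blk f r xs"
    \<comment> \<open>the VS-PGR scheme\<close>
    and x0_dom: "\<forall>\<omega>\<in>space M. x 0 \<omega> \<in> R"
    and x0_meas: "x 0 \<in> borel_measurable M"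
    and ghat_meas: "\<forall>k. (\<lambda>\<omega>. ghat blk \<psi> \<xi> S k (x k \<omega>) \<omega>) \<in> borel_measurable M"
    and step: "\<forall>k. \<forall>\<omega>\<in>space M. x (Suc k) \<omega> =
       (\<chi> j. prox blk (blk j) (r (blk j)) \<alpha> (x k \<omega> - \<alpha> *\<^sub>R ghat blk \<psi> \<xi> S k (x k \<omega>) \<omega>) $ j)"
    \<comment> \<open>parameters\<close>
    and \<rho>: "0 < \<rho>" "\<rho> < 1"
    and C: "0 < C"
    and init: "(\<integral>\<^sup>+\<omega>. ennreal ((norm (x 0 \<omega> - xs))\<^sup>2) \<partial>M) \<le> ennreal C"
    and \<alpha>: "0 < \<alpha>" "\<alpha> < 2 * \<eta> / Lt\<^sup>2"
  shows "q < 1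
    \<and> (\<rho> \<noteq> q \<longrightarrow> (\<forall>k. (\<integral>\<^sup>+\<omega>. ennreal ((norm (x k \<omega> - xs))\<^sup>2) \<partial>M)
          \<le> ennreal ((C + \<alpha>\<^sup>2 * \<nu>sq / (max (\<rho> / q) (q / \<rho>) - 1)) * (max \<rho> q) ^ k)))
    \<and> (\<rho> = q \<longrightarrow> (\<forall>qt. q < qt \<and> qt < 1 \<longrightarrow> (\<forall>k. (\<integral>\<^sup>+\<omega>. ennreal ((norm (x k \<omega> - xs))\<^sup>2) \<partial>M)
          \<le> ennreal ((C + \<alpha>\<^sup>2 * \<nu>sq / (exp 1 * ln (qt / q))) * qt ^ k))))"
proof -
  interpret prob_space M by (rule M)
  have a0: "0 < \<alpha>" using \<alpha>(1) .
  have L0: "0 < L" using \<eta>_pos \<eta>_le_L by linarith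
  have nn1: "0 \<le> 2 * (1 + 2 * \<alpha>\<^sup>2) * \<nu>1\<^sup>2" by simp
  have Lt2: "Lt\<^sup>2 = 1 + 2 * (1 + 2 * \<alpha>\<^sup>2) * \<nu>1\<^sup>2 + 2 * L\<^sup>2"
  proof -
    have "0 \<le> 1 + 2 * (1 + 2 * \<alpha>\<^sup>2) * \<nu>1\<^sup>2 + 2 * L\<^sup>2" using nn1 by simp
    then show ?thesis unfolding Lt_def by simp
  qed
  have etaL2: "\<eta>\<^sup>2 \<le> L\<^sup>2" using \<eta>_pos \<eta>_le_L by (intro power_mono) auto
  have Lt2L: "1 + 2 * L\<^sup>2 \<le> Lt\<^sup>2" using Lt2 nn1 by linarith
  have Lt2pos: "0 < Lt\<^sup>2" using Lt2L zero_le_power2[of L] by linarith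
  have aLt: "\<alpha> * Lt\<^sup>2 < 2 * \<eta>" using \<alpha>(2) Lt2pos by (simp add: pos_less_divide_eq)
  have q_eq: "q = 1 - 2 * \<alpha> * \<eta> + \<alpha>\<^sup>2 * Lt\<^sup>2" by (simp add: q_def)
  have q1: "q < 1"
  proof -
    have "\<alpha> * (\<alpha> * Lt\<^sup>2) < \<alpha> * (2 * \<eta>)" using aLt a0 by (intro mult_strict_left_mono) auto
    moreover have "\<alpha>\<^sup>2 * Lt\<^sup>2 = \<alpha> * (\<alpha> * Lt\<^sup>2)" by (simp add: power2_eq_square)
    ultimately show ?thesis unfolding q_eq by linarith
  qed
  have aeta: "\<alpha> * \<eta> < 1"
  proof (rule ccontr)
    assume "\<not> \<alpha> * \<eta> < 1"
    then have h: "1 \<le> \<alpha> * \<eta>" by simp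
    have "\<alpha> * (1 + 2 * L\<^sup>2) \<le> \<alpha> * Lt\<^sup>2" using Lt2L a0 by (intro mult_left_mono) auto
    moreover have "\<alpha> * (1 + 2 * \<eta>\<^sup>2) \<le> \<alpha> * (1 + 2 * L\<^sup>2)" using etaL2 a0 by (intro mult_left_mono) auto
    moreover have "2 * \<eta> * 1 \<le> 2 * \<eta> * (\<alpha> * \<eta>)" using h \<eta>_pos by (intro mult_left_mono) auto
    moreover have "2 * \<eta> * (\<alpha> * \<eta>) = 2 * \<alpha> * \<eta>\<^sup>2" by (simp add: power2_eq_square algebra_simps)
    moreover have "\<alpha> * (1 + 2 * \<eta>\<^sup>2) = \<alpha> + 2 * \<alpha> * \<eta>\<^sup>2" by (simp add: algebra_simps)
    ultimately have "\<alpha> + 2 * \<eta> \<le> \<alpha> * Lt\<^sup>2" by linarith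
    then show False using aLt a0 by simp
  qed
  define Pc where "Pc = 1 - 2 * \<alpha> * \<eta> + \<alpha>\<^sup>2 * L\<^sup>2"
  have "(1 - \<alpha> * \<eta>)\<^sup>2 \<le> Pc"
  proof -
    have "\<alpha>\<^sup>2 * \<eta>\<^sup>2 \<le> \<alpha>\<^sup>2 * L\<^sup>2" using etaL2 by (intro mult_left_mono) auto
    moreover have "(1 - \<alpha> * \<eta>)\<^sup>2 = 1 - 2 * \<alpha> * \<eta> + \<alpha>\<^sup>2 * \<eta>\<^sup>2"
      by (simp add: power2_diff power_mult_distrib algebra_simps)
    ultimately show ?thesis by (simp add: Pc_def)
  qed
  moreover have "0 < (1 - \<alpha> * \<eta>)\<^sup>2" using aeta by simp
  ultimately have Pc0: "0 < Pc" by linarith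
  have Pc1: "Pc \<le> 1"
  proof -
    have "L\<^sup>2 \<le> Lt\<^sup>2" using Lt2L zero_le_power2[of L] by linarith
    then have "\<alpha> * L\<^sup>2 \<le> \<alpha> * Lt\<^sup>2" using a0 by (intro mult_left_mono) auto
    then have "\<alpha> * L\<^sup>2 < 2 * \<eta>" using aLt by linarith
    then have "\<alpha> * (\<alpha> * L\<^sup>2) \<le> \<alpha> * (2 * \<eta>)" using a0 by (intro mult_left_mono) auto
    moreover have "\<alpha>\<^sup>2 * L\<^sup>2 = \<alpha> * (\<alpha> * L\<^sup>2)" by (simp add: power2_eq_square)
    ultimately show ?thesis unfolding Pc_def by linarith
  qed
  define cw where "cw = \<alpha>\<^sup>2 + Pc / (1 + L\<^sup>2)"
  define q0 where "q0 = Pc + \<alpha>\<^sup>2 * (1 + L\<^sup>2)"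
  have hL: "1 \<le> 1 + L\<^sup>2" by simp
  have PcL: "Pc / (1 + L\<^sup>2) \<le> Pc"
  proof -
    have "Pc * 1 \<le> Pc * (1 + L\<^sup>2)" using Pc0 hL by (intro mult_left_mono) auto
    moreover have "0 < 1 + L\<^sup>2" using hL by linarith
    ultimately show ?thesis by (simp add: pos_divide_le_eq)
  qed
  have cw0: "0 \<le> cw" using Pc0 by (simp add: cw_def add_nonneg_nonneg)
  have cw_le1: "cw \<le> 1 + 2 * \<alpha>\<^sup>2" unfolding cw_def using PcL Pc1 zero_le_power2[of \<alpha>] by linarith
  have q_split: "q = q0 + 2 * \<alpha>\<^sup>2 * (1 + 2 * \<alpha>\<^sup>2) * \<nu>1\<^sup>2"
    unfolding q_eq q0_def Pc_def Lt2 by (simp add: algebra_simps)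
  have q00: "0 \<le> q0" using Pc0 by (simp add: q0_def)
  have aL0: "0 \<le> \<alpha>\<^sup>2 * L\<^sup>2" by simp
  have "\<alpha>\<^sup>2 * (1 + L\<^sup>2) = \<alpha>\<^sup>2 + \<alpha>\<^sup>2 * L\<^sup>2" by (simp add: algebra_simps)
  then have cw_le_q0: "cw \<le> q0" unfolding cw_def q0_def using PcL aL0 by linarith
  have "0 \<le> 2 * \<alpha>\<^sup>2 * (1 + 2 * \<alpha>\<^sup>2) * \<nu>1\<^sup>2" by simp
  then have q0_le_q: "q0 \<le> q" using q_split by linarith
  have "0 \<le> \<alpha>\<^sup>2 * (1 + L\<^sup>2)" by simp
  then have "0 < q0" using Pc0 unfolding q0_def by linarith
  then have qpos: "0 < q" using q0_le_q by linarith
  have cw_le_q: "cw \<le> q" using cw_le_q0 q0_le_q by linarith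
  obtain \<omega>0 where \<omega>0: "\<omega>0 \<in> space M" using not_empty by blast
  have x0R: "x 0 \<omega>0 \<in> R" using x0_dom \<omega>0 by blast
  have y0: "\<forall>i. r i (x 0 \<omega>0) < \<infinity>" using x0R by (simp add: R_def edom_def)
  have xsR: "\<forall>j. xs \<in> edom (r j)"
  proof
    fix i
    show "xs \<in> edom (r i)"
    proof (rule ccontr)
      assume "xs \<notin> edom (r i)"
      then have inf: "r i xs = \<infinity>" unfolding edom_def by (cases "r i xs") auto
      define u where "u = x 0 \<omega>0"
      have "restr blk i (embed blk i u xs) = restr blk i u" by (simp add: vec_eq_iff embed_def)
      then have "r i (embed blk i u xs) = r i u" using r_block by metis
      then have fin: "r i (embed blk i u xs) < \<infinity>" using y0 by (simp add: u_def)
      have "ereal (f i xs) + r i xs \<le> ereal (f i (embed blk i u xs)) + r i (embed blk i u xs)"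
        using NE unfolding is_NE_def by blast
      then show False using inf fin r_proper by (cases "r i (embed blk i u xs)") auto
    qed
  qed
  have xsR': "xs \<in> R" using xsR by (simp add: R_def)
  have pv: "\<forall>i z. VIp blk i (r i) \<alpha> (restr blk i z) (prox blk i (r i) \<alpha> z)"
  proof (intro allI)
    fix i z
    have rb: "\<forall>y. r i y = r i (restr blk i y)" using r_block by blast
    have pr: "\<forall>y. r i y \<noteq> -\<infinity>" using r_proper by blast
    show "VIp blk i (r i) \<alpha> (restr blk i z) (prox blk i (r i) \<alpha> z)"
      by (rule prox_VI[OF rb pr]) (use r_lsc r_convex y0 a0 in auto)
  qed
  have wv: "\<forall>i. VIp blk i (r i) \<alpha> (restr blk i (xs - \<alpha> *\<^sub>R Gmap blk f xs)) (restr blk i xs)"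
    using NE_VI[OF NE xsR r_block r_proper r_convex A2 a0] by blast
  have stepP: "\<forall>k. \<forall>\<omega>\<in>space M. x (Suc k) \<omega> = Pmap blk r \<alpha> (x k \<omega> - \<alpha> *\<^sub>R ghat blk \<psi> \<xi> S k (x k \<omega>) \<omega>)"
    using step by (simp add: Pmap_def)
  have PR: "Pmap blk r \<alpha> z \<in> R" for z
  proof -
    have "r j (Pmap blk r \<alpha> z) < \<infinity>" for j
    proof -
      have rp: "restr blk j (Pmap blk r \<alpha> z) = prox blk j (r j) \<alpha> z"
        using pv by (intro restr_Pmap) (simp add: VIp_def)
      have "r j (Pmap blk r \<alpha> z) = r j (prox blk j (r j) \<alpha> z)" using r_block rp by metis
      then show ?thesis using pv by (simp add: VIp_def)
    qed
    then show ?thesis by (simp add: R_def edom_def)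
  qed
  have xR: "\<forall>\<omega>\<in>space M. x k \<omega> \<in> R" for k
  proof (cases k)
    case 0 then show ?thesis using x0_dom by simp
  next
    case (Suc j) then show ?thesis using stepP PR by simp
  qed
  have Pcont: "continuous_on UNIV (Pmap blk r \<alpha>)" by (rule Pmap_cont[OF pv])
  have xmeas: "x k \<in> borel_measurable M" for k
  proof (induction k)
    case 0 show ?case by (rule x0_meas)
  next
    case (Suc k)
    have gm: "(\<lambda>\<omega>. ghat blk \<psi> \<xi> S k (x k \<omega>) \<omega>) \<in> borel_measurable M" using ghat_meas by blast
    have m1: "(\<lambda>\<omega>. x k \<omega> - \<alpha> *\<^sub>R ghat blk \<psi> \<xi> S k (x k \<omega>) \<omega>) \<in> borel_measurable M"
      using Suc gm by (intro borel_measurable_diff borel_measurable_scaleR) auto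
    have "(\<lambda>\<omega>. Pmap blk r \<alpha> (x k \<omega> - \<alpha> *\<^sub>R ghat blk \<psi> \<xi> S k (x k \<omega>) \<omega>)) \<in> borel_measurable M"
      using measurable_compose[OF m1 borel_measurable_continuous_onI[OF Pcont]] by (simp add: o_def)
    then show ?case using measurable_cong[of M "x (Suc k)" "\<lambda>\<omega>. Pmap blk r \<alpha> (x k \<omega> - \<alpha> *\<^sub>R ghat blk \<psi> \<xi> S k (x k \<omega>) \<omega>)" borel] stepP
      by auto
  qed
  have Gcont: "continuous_on R (Gmap blk f)"
  proof -
    have "L-lipschitz_on R (Gmap blk f)" by (rule lipschitz_onI) (use B1 L0 in \<open>auto simp: dist_norm\<close>)
    then show ?thesis by (rule lipschitz_on_continuous_on)
  qed
  have Gmeas: "(\<lambda>\<omega>. Gmap blk f (x k \<omega>)) \<in> borel_measurable M" for k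
    using meas_cont_comp[OF Gcont xmeas xR] .
  have pw: "(norm (x (Suc k) \<omega> - xs))\<^sup>2 \<le> q0 * (norm (x k \<omega> - xs))\<^sup>2
      + cw * (norm (ghat blk \<psi> \<xi> S k (x k \<omega>) \<omega> - Gmap blk f (x k \<omega>)))\<^sup>2"
    if \<omega>: "\<omega> \<in> space M" for k \<omega>
  proof -
    define g where "g = ghat blk \<psi> \<xi> S k (x k \<omega>) \<omega>"
    define e where "e = x k \<omega> - xs"
    define D where "D = Gmap blk f (x k \<omega>) - Gmap blk f xs"
    define w where "w = g - Gmap blk f (x k \<omega>)"
    have xkR: "x k \<omega> \<in> R" using xR \<omega> by blast
    have "(norm (x (Suc k) \<omega> - xs))\<^sup>2 = (norm (Pmap blk r \<alpha> (x k \<omega> - \<alpha> *\<^sub>R g) - xs))\<^sup>2"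
      using stepP \<omega> by (simp add: g_def)
    also have "\<dots> \<le> (norm ((x k \<omega> - \<alpha> *\<^sub>R g) - (xs - \<alpha> *\<^sub>R Gmap blk f xs)))\<^sup>2"
      by (rule Pmap_contr[OF pv wv])
    also have "(x k \<omega> - \<alpha> *\<^sub>R g) - (xs - \<alpha> *\<^sub>R Gmap blk f xs) = e - \<alpha> *\<^sub>R (D + w)"
      by (simp add: e_def D_def w_def algebra_simps)
    finally have h1: "(norm (x (Suc k) \<omega> - xs))\<^sup>2 \<le> (norm (e - \<alpha> *\<^sub>R (D + w)))\<^sup>2" .
    have "norm D \<le> L * norm e" using B1 xkR xsR' by (simp add: D_def e_def)
    then have "(norm D)\<^sup>2 \<le> (L * norm e)\<^sup>2" by (simp add: power_mono)
    then have DL: "(norm D)\<^sup>2 \<le> L\<^sup>2 * (norm e)\<^sup>2" by (simp add: power_mult_distrib)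
    have De: "\<eta> * (norm e)\<^sup>2 \<le> D \<bullet> e" using B2 xkR xsR' by (simp add: D_def e_def)
    have h2: "(norm (e - \<alpha> *\<^sub>R (D + w)))\<^sup>2 \<le> (Pc + \<alpha>\<^sup>2 * (1 + L\<^sup>2)) * (norm e)\<^sup>2 + (\<alpha>\<^sup>2 + Pc / (1 + L\<^sup>2)) * (norm w)\<^sup>2"
      by (rule young_step[OF a0 Pc0 Pc_def DL De])
    from order_trans[OF h1 h2] show ?thesis by (simp only: q0_def cw_def e_def w_def g_def)
  qed
  define a where "a k = (\<integral>\<^sup>+\<omega>. ennreal ((norm (x k \<omega> - xs))\<^sup>2) \<partial>M)" for k
  define K0 where "K0 = 2 * \<nu>1\<^sup>2 * (norm xs)\<^sup>2 + \<nu>2\<^sup>2"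
  define gg where "gg = cw * \<alpha>\<^sup>2 * K0"
  have K00: "0 \<le> K0" by (simp add: K0_def)
  have gg0: "0 \<le> gg" using cw0 K00 by (simp add: gg_def)
  have Sb: "1 / real (S k) \<le> \<alpha>\<^sup>2 * \<rho> ^ Suc k \<and> 0 < real (S k)" for k
  proof -
    have pos: "0 < (1 / \<alpha>\<^sup>2) * (1 / \<rho> ^ (k + 1))" using a0 \<rho> by simp
    have le: "(1 / \<alpha>\<^sup>2) * (1 / \<rho> ^ (k + 1)) \<le> real (S k)" unfolding S_def by (rule real_nat_ceiling_ge)
    then have Sp: "0 < real (S k)" using pos by linarith
    have pp: "0 < real (S k) * ((1 / \<alpha>\<^sup>2) * (1 / \<rho> ^ (k + 1)))" using Sp pos by (rule mult_pos_pos)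
    have "1 / real (S k) \<le> 1 / ((1 / \<alpha>\<^sup>2) * (1 / \<rho> ^ (k + 1)))"
      by (rule divide_left_mono[OF le _ pp]) simp
    also have "\<dots> = \<alpha>\<^sup>2 * \<rho> ^ Suc k" by simp
    finally show ?thesis using Sp by simp
  qed
  have bnn: "0 \<le> bseq C q gg \<rho> k" for k
    by (induction k) (use C qpos gg0 \<rho> in auto)
  have main: "a k \<le> ennreal (bseq C q gg \<rho> k)" for k
  proof (induction k)
    case 0 show ?case using init by (simp add: a_def)
  next
    case (Suc k)
    define W where "W = (\<lambda>\<omega>. (norm (ghat blk \<psi> \<xi> S k (x k \<omega>) \<omega> - Gmap blk f (x k \<omega>)))\<^sup>2)"
    define E where "E = (\<lambda>\<omega>. (norm (x k \<omega> - xs))\<^sup>2)"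
    define b where "b = bseq C q gg \<rho> k"
    define s where "s = 2 * \<nu>1\<^sup>2 / real (S k)"
    define c where "c = K0 / real (S k)"
    have Sk: "1 / real (S k) \<le> \<alpha>\<^sup>2 * \<rho> ^ Suc k" "0 < real (S k)" using Sb[of k] by auto
    have b0: "0 \<le> b" using bnn by (simp add: b_def)
    have s0: "0 \<le> s" using Sk by (simp add: s_def)
    have c0: "0 \<le> c" using Sk K00 by (simp add: c_def)
    note [measurable] = xmeas Gmeas
    have gm[measurable]: "(\<lambda>\<omega>. ghat blk \<psi> \<xi> S k (x k \<omega>) \<omega>) \<in> borel_measurable M" using ghat_meas by blast
    have mE: "(\<lambda>\<omega>. ennreal (E \<omega>)) \<in> borel_measurable M" unfolding E_def by measurable
    have mW: "(\<lambda>\<omega>. ennreal (W \<omega>)) \<in> borel_measurable M" unfolding W_def by measurable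
    have ak: "a k = (\<integral>\<^sup>+\<omega>. ennreal (E \<omega>) \<partial>M)" by (simp add: a_def E_def)
    have "a (Suc k) \<le> (\<integral>\<^sup>+\<omega>. ennreal (q0 * E \<omega> + cw * W \<omega>) \<partial>M)"
      unfolding a_def using pw by (intro nn_integral_mono ennreal_leI) (simp add: E_def W_def)
    also have "\<dots> = (\<integral>\<^sup>+\<omega>. ennreal q0 * ennreal (E \<omega>) + ennreal cw * ennreal (W \<omega>) \<partial>M)"
      using q00 cw0 by (intro nn_integral_cong) (simp add: E_def W_def ennreal_plus ennreal_mult)
    also have "\<dots> = ennreal q0 * a k + ennreal cw * (\<integral>\<^sup>+\<omega>. ennreal (W \<omega>) \<partial>M)"
      using mE mW by (simp add: nn_integral_add nn_integral_cmult ak)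
    also have "(\<integral>\<^sup>+\<omega>. ennreal (W \<omega>) \<partial>M) \<le> ennreal s * a k + ennreal c"
    proof -
      have sub: "subalgebra M (natfilt M x k)" using xmeas by (intro natfilt_subalg) auto
      interpret F: finite_measure_subalgebra M "natfilt M x k"
        by (intro finite_measure_subalgebra.intro finite_measure_axioms) (simp add: finite_measure_subalgebra_axioms_def sub)
      have ae: "AE \<omega> in M. nn_cond_exp M (natfilt M x k) (\<lambda>\<omega>. ennreal (W \<omega>)) \<omega>
          \<le> ennreal ((\<nu>1\<^sup>2 * (norm (x k \<omega>))\<^sup>2 + \<nu>2\<^sup>2) / real (S k))"
        unfolding W_def by (rule B3[rule_format])
      have "(\<integral>\<^sup>+\<omega>. ennreal (W \<omega>) \<partial>M) = (\<integral>\<^sup>+\<omega>. nn_cond_exp M (natfilt M x k) (\<lambda>\<omega>. ennreal (W \<omega>)) \<omega> \<partial>M)"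
        using F.nn_cond_exp_intg[of "\<lambda>_. 1" "\<lambda>\<omega>. ennreal (W \<omega>)"] mW by simp
      also have "\<dots> \<le> (\<integral>\<^sup>+\<omega>. ennreal ((\<nu>1\<^sup>2 * (norm (x k \<omega>))\<^sup>2 + \<nu>2\<^sup>2) / real (S k)) \<partial>M)"
        by (rule nn_integral_mono_AE[OF ae])
      also have "\<dots> \<le> (\<integral>\<^sup>+\<omega>. ennreal s * ennreal (E \<omega>) + ennreal c \<partial>M)"
      proof (intro nn_integral_mono)
        fix \<omega> assume "\<omega> \<in> space M"
        have "(norm (x k \<omega>))\<^sup>2 \<le> 2 * (norm (x k \<omega> - xs))\<^sup>2 + 2 * (norm xs)\<^sup>2"
          using norm_sq_sum_le[of "x k \<omega> - xs" xs] by simp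
        then have "\<nu>1\<^sup>2 * (norm (x k \<omega>))\<^sup>2 \<le> \<nu>1\<^sup>2 * (2 * (norm (x k \<omega> - xs))\<^sup>2 + 2 * (norm xs)\<^sup>2)"
          by (intro mult_left_mono) auto
        then have "(\<nu>1\<^sup>2 * (norm (x k \<omega>))\<^sup>2 + \<nu>2\<^sup>2) / real (S k) \<le> (\<nu>1\<^sup>2 * (2 * (norm (x k \<omega> - xs))\<^sup>2 + 2 * (norm xs)\<^sup>2) + \<nu>2\<^sup>2) / real (S k)"
          using Sk by (intro divide_right_mono) auto
        also have "\<dots> = s * E \<omega> + c" by (simp add: s_def c_def E_def K0_def add_divide_distrib algebra_simps)
        finally have "ennreal ((\<nu>1\<^sup>2 * (norm (x k \<omega>))\<^sup>2 + \<nu>2\<^sup>2) / real (S k)) \<le> ennreal (s * E \<omega> + c)"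
          by (rule ennreal_leI)
        also have "ennreal (s * E \<omega> + c) = ennreal s * ennreal (E \<omega>) + ennreal c"
          using s0 c0 by (simp add: E_def ennreal_mult)
        finally show "ennreal ((\<nu>1\<^sup>2 * (norm (x k \<omega>))\<^sup>2 + \<nu>2\<^sup>2) / real (S k)) \<le> ennreal s * ennreal (E \<omega>) + ennreal c" .
      qed
      also have "\<dots> = ennreal s * a k + ennreal c"
        using mE by (simp add: nn_integral_add nn_integral_cmult ak emeasure_space_1)
      finally show ?thesis .
    qed
    then have "ennreal cw * (\<integral>\<^sup>+\<omega>. ennreal (W \<omega>) \<partial>M) \<le> ennreal cw * (ennreal s * a k + ennreal c)"
      by (rule mult_left_mono) simp
    then have "ennreal q0 * a k + ennreal cw * (\<integral>\<^sup>+\<omega>. ennreal (W \<omega>) \<partial>M) \<le> ennreal q0 * a k + ennreal cw * (ennreal s * a k + ennreal c)"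
      by (rule add_left_mono)
    also have "\<dots> \<le> ennreal q0 * ennreal b + ennreal cw * (ennreal s * ennreal b + ennreal c)"
      using Suc.IH unfolding b_def by (intro add_mono mult_left_mono order_refl) auto
    also have "\<dots> = ennreal (q0 * b + cw * (s * b + c))"
      using q00 cw0 s0 c0 b0 by (simp add: ennreal_plus ennreal_mult)
    also have "\<dots> \<le> ennreal (bseq C q gg \<rho> (Suc k))"
    proof (rule ennreal_leI)
      have "s \<le> 2 * \<nu>1\<^sup>2 * \<alpha>\<^sup>2"
      proof -
        have "\<rho> ^ Suc k \<le> 1" using \<rho> by (intro power_le_one) auto
        then have "\<alpha>\<^sup>2 * \<rho> ^ Suc k \<le> \<alpha>\<^sup>2" using mult_left_le[of "\<rho> ^ Suc k" "\<alpha>\<^sup>2"] by simp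
        then have "1 / real (S k) \<le> \<alpha>\<^sup>2" using Sk by linarith
        then have "2 * \<nu>1\<^sup>2 * (1 / real (S k)) \<le> 2 * \<nu>1\<^sup>2 * \<alpha>\<^sup>2" by (intro mult_left_mono) auto
        then show ?thesis by (simp add: s_def)
      qed
      then have "cw * s \<le> (1 + 2 * \<alpha>\<^sup>2) * (2 * \<nu>1\<^sup>2 * \<alpha>\<^sup>2)"
        using cw_le1 cw0 s0 by (intro mult_mono) auto
      then have "q0 + cw * s \<le> q" using q_split by (simp add: algebra_simps)
      then have t1: "(q0 + cw * s) * b \<le> q * b" using b0 by (intro mult_right_mono) auto
      have "c = K0 * (1 / real (S k))" by (simp add: c_def)
      also have "\<dots> \<le> K0 * (\<alpha>\<^sup>2 * \<rho> ^ Suc k)" by (rule mult_left_mono[OF Sk(1) K00])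
      finally have "cw * c \<le> cw * (K0 * (\<alpha>\<^sup>2 * \<rho> ^ Suc k))" using cw0 by (intro mult_left_mono) auto
      also have "\<dots> = gg * \<rho> ^ Suc k" by (simp add: gg_def algebra_simps)
      finally have t2: "cw * c \<le> gg * \<rho> ^ Suc k" .
      have "q0 * b + cw * (s * b + c) = (q0 + cw * s) * b + cw * c" by (simp add: algebra_simps)
      moreover have "bseq C q gg \<rho> (Suc k) = q * b + gg * \<rho> ^ Suc k" by (simp add: b_def)
      ultimately show "q0 * b + cw * (s * b + c) \<le> bseq C q gg \<rho> (Suc k)"
        using t1 t2 by linarith
    qed
    finally show ?case by simp
  qed
  define V where "V = \<alpha>\<^sup>2 * \<nu>sq"
  have Vsq: "\<nu>sq = (1 + 2 * \<alpha>\<^sup>2) * K0" by (simp add: \<nu>sq_def K0_def algebra_simps)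
  have ggV: "gg \<le> V"
  proof -
    have "cw * (\<alpha>\<^sup>2 * K0) \<le> (1 + 2 * \<alpha>\<^sup>2) * (\<alpha>\<^sup>2 * K0)" using cw_le1 K00 by (intro mult_right_mono) auto
    then show ?thesis by (simp add: gg_def V_def Vsq algebra_simps)
  qed
  have ggVq: "gg \<le> V * q"
  proof -
    have "q * 1 \<le> q * (1 + 2 * \<alpha>\<^sup>2)" using qpos by (intro mult_left_mono) auto
    then have "cw \<le> q * (1 + 2 * \<alpha>\<^sup>2)" using cw_le_q by linarith
    then have "cw * (\<alpha>\<^sup>2 * K0) \<le> (q * (1 + 2 * \<alpha>\<^sup>2)) * (\<alpha>\<^sup>2 * K0)" using K00 by (intro mult_right_mono) auto
    then show ?thesis by (simp add: gg_def V_def Vsq algebra_simps)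
  qed
  have C0: "0 \<le> C" using C by simp
  show ?thesis
  proof (intro conjI impI allI)
    show "q < 1" by (rule q1)
  next
    fix k assume ne: "\<rho> \<noteq> q"
    have "a k \<le> ennreal (bseq C q gg \<rho> k)" by (rule main)
    also have "\<dots> \<le> ennreal ((C + V / (max (\<rho> / q) (q / \<rho>) - 1)) * (max \<rho> q) ^ k)"
      by (rule ennreal_leI, rule final_neq[OF \<rho> qpos ne gg0 ggV ggVq C0])
    finally show "(\<integral>\<^sup>+\<omega>. ennreal ((norm (x k \<omega> - xs))\<^sup>2) \<partial>M)
          \<le> ennreal ((C + \<alpha>\<^sup>2 * \<nu>sq / (max (\<rho> / q) (q / \<rho>) - 1)) * (max \<rho> q) ^ k)"
      by (simp add: a_def V_def)
  next
    fix qt k assume eq: "\<rho> = q" and qt: "q < qt \<and> qt < 1"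
    have "a k \<le> ennreal (bseq C q gg \<rho> k)" by (rule main)
    also have "\<dots> = ennreal (bseq C q gg q k)" using eq by simp
    also have "\<dots> \<le> ennreal ((C + V / (exp 1 * ln (qt / q))) * qt ^ k)"
      using qt by (intro ennreal_leI final_eq[OF qpos _ gg0 ggV C0]) auto
    finally show "(\<integral>\<^sup>+\<omega>. ennreal ((norm (x k \<omega> - xs))\<^sup>2) \<partial>M)
          \<le> ennreal ((C + \<alpha>\<^sup>2 * \<nu>sq / (exp 1 * ln (qt / q))) * qt ^ k)"
      by (simp add: a_def V_def)
  qed
qed


end
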